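(* Define $\alpha,\beta:[0,2\pi]\to\mathbb{R}^3$ and $\gamma:[0,\pi]\to\mathbb{R}^3$ by $\alpha(t)=(\cos t,\sin t,1)$, $\beta(t)=(\cos t,\sin t,-1)$, $\gamma(t)=\big(2\cos(2t)-1,\ 2\sin(2t),\ \tfrac98\cos t-\tfrac18\cos(3t)\big)$, and let $C=\operatorname{conv}\big(\alpha([0,2\pi])\cup\beta([0,2\pi])\cup\gamma([0,\pi])\big)\subseteq\mathbb{R}^3$. Then the cone $\mathcal{K}=\operatorname{cone}(C\times\{1\})\subseteq\mathbb{R}^4$ is nice.
   Context: $\operatorname{cone}S=\{\lambda x:x\in S,\lambda\ge0\}$. A face of a closed convex cone $\mathcal{K}$ is a closed convex subset $\mathcal{F}\subseteq\mathcal{K}$ such that whenever $x,y\in\mathcal{K}$ and $\alpha x+(1-\alpha)y\in\mathcal{F}$ for some $\alpha\in(0,1)$, then $x,y\in\mathcal{F}$. $\mathcal{K}$ is nice if $\mathcal{F}^*=\mathcal{K}^*+\mathcal{F}^\perp$ for every face $\mathcal{F}$, where $S^*=\{y:\langle y,x\rangle\ge0\ \forall x\in S\}$. *)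

theory Defs
  imports "HOL-Analysis.Analysis"
begin

definition cone_of :: "'a::real_vector set \<Rightarrow> 'a set" where
  "cone_of S = {l *\<^sub>R x | l x. x \<in> S \<and> l \<ge> 0}"

definition dual_cone :: "'a::real_inner set \<Rightarrow> 'a set" where
  "dual_cone S = {y. \<forall>x\<in>S. inner y x \<ge> 0}"

definition perp :: "'a::real_inner set \<Rightarrow> 'a set" where
  "perp S = {y. \<forall>x\<in>S. inner y x = 0}"

definition is_face :: "'a::real_inner set \<Rightarrow> 'a set \<Rightarrow> bool" where
  "is_face F K \<longleftrightarrow> closed F \<and> convex F \<and> F \<subseteq> K \<and>
     (\<forall>x\<in>K. \<forall>y\<in>K. \<forall>a. 0 < a \<and> a < 1 \<and> a *\<^sub>R x + (1 - a) *\<^sub>R y \<in> F \<longrightarrow> x \<in> F \<and> y \<in> F)"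

definition nice :: "'a::real_inner set \<Rightarrow> bool" where
  "nice K \<longleftrightarrow> (\<forall>F. is_face F K \<longrightarrow>
     dual_cone F = {u + v | u v. u \<in> dual_cone K \<and> v \<in> perp F})"

definition curve_alpha :: "real \<Rightarrow> real^3" where
  "curve_alpha t = vector [cos t, sin t, 1]"

definition curve_beta :: "real \<Rightarrow> real^3" where
  "curve_beta t = vector [cos t, sin t, -1]"

definition curve_gamma :: "real \<Rightarrow> real^3" where
  "curve_gamma t = vector [2 * cos (2 * t) - 1, 2 * sin (2 * t),
                           9/8 * cos t - 1/8 * cos (3 * t)]"

definition setC :: "(real^3) set" where
  "setC = convex hull (curve_alpha ` {0..2*pi} \<union> curve_beta ` {0..2*pi} \<union> curve_gamma ` {0..pi})"

definition lift4 :: "real^3 \<Rightarrow> real^4" where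
  "lift4 x = vector [x $ 1, x $ 2, x $ 3, 1]"

end

theory Submission
  imports Defs
begin


lemma vector_4 [simp]:
 "(vector [x,y,z,w] ::('a::zero)^4)$1 = x"
 "(vector [x,y,z,w] ::('a::zero)^4)$2 = y"
 "(vector [x,y,z,w] ::('a::zero)^4)$3 = z"
 "(vector [x,y,z,w] ::('a::zero)^4)$4 = w"
  unfolding vector_def by simp_all

lemma lift4_comp [simp]: "lift4 x $ 1 = x$1" "lift4 x $ 2 = x$2" "lift4 x $ 3 = x$3" "lift4 x $ 4 = 1"
  by (simp_all add: lift4_def)

lemma inner4: "(y::real^4) \<bullet> z = y$1*z$1 + y$2*z$2 + y$3*z$3 + y$4*z$4"
  by (simp add: inner_vec_def sum_4)

lemma inner_lift: "(y::real^4) \<bullet> lift4 p = y$1*p$1 + y$2*p$2 + y$3*p$3 + y$4"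
  by (simp add: inner4)

lemma lift4_comb: "a + b = 1 \<Longrightarrow> lift4 (a *\<^sub>R p + b *\<^sub>R q) = a *\<^sub>R lift4 p + b *\<^sub>R lift4 q"
  by (simp add: vec_eq_iff forall_4)

lemma alpha_comp [simp]: "curve_alpha t $ 1 = cos t" "curve_alpha t $ 2 = sin t" "curve_alpha t $ 3 = 1"
  by (simp_all add: curve_alpha_def)
lemma beta_comp [simp]: "curve_beta t $ 1 = cos t" "curve_beta t $ 2 = sin t" "curve_beta t $ 3 = -1"
  by (simp_all add: curve_beta_def)
lemma gamma_comp [simp]: "curve_gamma t $ 1 = 2 * cos (2 * t) - 1" "curve_gamma t $ 2 = 2 * sin (2 * t)"
   "curve_gamma t $ 3 = 9/8 * cos t - 1/8 * cos (3 * t)"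
  by (simp_all add: curve_gamma_def)

lemma vec3_eq: "(x::real^3) = y \<longleftrightarrow> x$1 = y$1 \<and> x$2 = y$2 \<and> x$3 = y$3"
  by (simp add: vec_eq_iff forall_3)

definition zeta :: "real \<Rightarrow> real" where "zeta t = 9/8 * cos t - 1/8 * cos (3 * t)"

lemma zeta_cos: "zeta t = (3 * cos t - cos t ^ 3) / 2"
  unfolding zeta_def cos_treble_cos by (simp add: field_simps)

lemma one_minus_zeta: "1 - zeta t = (1 - cos t)^2 * (2 + cos t) / 2"
  unfolding zeta_cos by (simp add: power2_eq_square power3_eq_cube field_simps)

lemma one_plus_zeta: "1 + zeta t = (1 + cos t)^2 * (2 - cos t) / 2"
  unfolding zeta_cos by (simp add: power2_eq_square power3_eq_cube field_simps)

lemma zeta_pi_minus: "zeta (pi - t) = - zeta t"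
  by (simp add: zeta_def right_diff_distrib cos_diff)

lemma gamma0: "curve_gamma 0 = curve_alpha 0"
  by (simp add: vec3_eq)
lemma gammapi: "curve_gamma pi = curve_beta 0"
  by (simp add: vec3_eq)



lemma sin3: "sin (3 * (t::real)) = 3 * sin t - 4 * sin t ^ 3"
proof -
  have "sin (3 * t) = sin (2 * t + t)" by simp
  also have "\<dots> = 2 * sin t * cos t * cos t + (1 - 2 * sin t ^ 2) * sin t"
    by (simp only: sin_add sin_double cos_double_sin)
  also have "\<dots> = 3 * sin t - 4 * sin t ^ 3"
    using sin_cos_squared_add[of t] by algebra
  finally show ?thesis .
qed

definition KK :: "real \<Rightarrow> real \<Rightarrow> real" where "KK p v = sin (3 * v + 2 * p) + 5 * sin v"

lemma KK_shift: "KK p (v + pi) = - KK p v"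
proof -
  have "sin (3 * (v + pi) + 2 * p) = sin ((3 * v + 2 * p + pi) + 2 * pi)"
    by (simp add: algebra_simps)
  also have "\<dots> = - sin (3 * v + 2 * p)" by (simp only: sin_periodic sin_periodic_pi)
  finally show ?thesis by (simp add: KK_def)
qed

lemma rolle':
  fixes f f' :: "real \<Rightarrow> real"
  assumes "a < b" "f a = f b" "\<And>x. a \<le> x \<Longrightarrow> x \<le> b \<Longrightarrow> (f has_real_derivative f' x) (at x)"
  shows "\<exists>z. a < z \<and> z < b \<and> f' z = 0"
proof -
  have "continuous_on {a..b} f"
    using assms(3) by (intro continuous_at_imp_continuous_on ballI) (metis DERIV_isCont atLeastAtMost_iff)
  moreover have "\<And>x. a < x \<Longrightarrow> x < b \<Longrightarrow> f differentiable (at x)"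
    using assms(3) real_differentiable_def by (meson less_imp_le)
  ultimately obtain z where z: "a < z" "z < b" "DERIV f z :> 0"
    using Rolle[of a b f] assms(1,2) by blast
  then have "f' z = 0" using assms(3)[of z] DERIV_unique by force
  with z show ?thesis by blast
qed

lemma mvt':
  fixes f f' :: "real \<Rightarrow> real"
  assumes "a < b" "\<And>x. a \<le> x \<Longrightarrow> x \<le> b \<Longrightarrow> (f has_real_derivative f' x) (at x)"
  shows "\<exists>z. a < z \<and> z < b \<and> f b - f a = (b - a) * f' z"
proof -
  have "continuous_on {a..b} f"
    using assms(2) by (intro continuous_at_imp_continuous_on ballI) (metis DERIV_isCont atLeastAtMost_iff)
  moreover have "\<And>x. a < x \<Longrightarrow> x < b \<Longrightarrow> f differentiable (at x)"
    using assms(2) real_differentiable_def by (meson less_imp_le)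
  ultimately obtain l z where z: "a < z" "z < b" "DERIV f z :> l" "f b - f a = (b - a) * l"
    using MVT[of a b f] assms(1) by blast
  then have "f' z = l" using assms(2)[of z] DERIV_unique by force
  with z show ?thesis by blast
qed

lemma KK_window:
  assumes w1: "-(pi/2) \<le> w1" "w1 \<le> pi/2" and w2: "-(pi/2) \<le> w2" "w2 \<le> pi/2"
    and z: "KK p w1 = 0" "KK p w2 = 0"
  shows "w1 = w2"
proof (rule ccontr)
  assume ne: "w1 \<noteq> w2"
  have small: "\<bar>sin w\<bar> \<le> 1/5" if "KK p w = 0" for w
  proof -
    have "5 * sin w = - sin (3 * w + 2 * p)" using that by (simp add: KK_def)
    then have "\<bar>5 * sin w\<bar> \<le> 1" by (simp add: abs_sin_le_one)
    then show ?thesis by simp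
  qed
  have main: False if "-(pi/2) \<le> a" "a < b" "b \<le> pi/2" "KK p a = 0" "KK p b = 0" for a b
  proof -
    have der: "(KK p has_real_derivative (3 * cos (3 * x + 2 * p) + 5 * cos x)) (at x)" for x
      unfolding KK_def[abs_def]
      by (auto intro!: derivative_eq_intros simp: algebra_simps)
    obtain z where z: "a < z" "z < b" "KK p b - KK p a = (b - a) * (3 * cos (3 * z + 2 * p) + 5 * cos z)"
      using mvt'[OF \<open>a < b\<close> der] by blast
    have "sin a \<le> sin z" "sin z \<le> sin b"
      using z that by (auto intro!: sin_monotone_2pi_le)
    then have sz: "\<bar>sin z\<bar> \<le> 1/5" using small[OF that(4)] small[OF that(5)] by auto
    have cz: "0 \<le> cos z" using z that by (intro cos_ge_zero) auto
    have "cos z ^ 2 = 1 - sin z ^ 2" by (simp add: cos_squared_eq)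
    also have "\<dots> \<ge> 24/25"
    proof -
      have "sin z ^ 2 \<le> (1/5)^2" using sz by (metis abs_le_square_iff abs_of_nonneg zero_le_divide_1_iff zero_le_numeral power2_abs)
      then have "sin z ^ 2 \<le> 1/25" by (simp add: power_divide)
      then show ?thesis by linarith
    qed
    finally have "(9/10) ^ 2 \<le> cos z ^ 2" by (simp add: power_divide)
    then have "9/10 \<le> cos z" using cz power2_le_imp_le by blast
    moreover have "-1 \<le> cos (3 * z + 2 * p)" by simp
    ultimately have "0 < 3 * cos (3 * z + 2 * p) + 5 * cos z" by linarith
    then have "0 < KK p b - KK p a" using z(3) \<open>a < b\<close> by simp
    then show False using that by simp
  qed
  show False
  proof (cases "w1 < w2")
    case True then show ?thesis using main[of w1 w2] w1 w2 z by auto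
  next
    case False then show ?thesis using main[of w2 w1] w1 w2 z ne by auto
  qed
qed



lemma KK_zero_shift:
  assumes "KK p v = 0" "-2*pi < v" "v < pi"
  shows "\<exists>s. s \<in> {-pi,0,pi,2*pi} \<and> -(pi/2) \<le> v + s \<and> v + s \<le> pi/2 \<and> KK p (v+s) = 0"
proof -
  have m: "KK p (v - pi) = 0" using KK_shift[of p "v - pi"] assms(1) by simp
  have p1: "KK p (v + pi) = 0" using KK_shift[of p v] assms(1) by simp
  have p2: "KK p (v + 2*pi) = 0" using KK_shift[of p "v + pi"] p1 by (simp add: algebra_simps)
  consider "v < -(3/2)*pi" | "-(3/2)*pi \<le> v \<and> v < -(pi/2)" | "-(pi/2) \<le> v \<and> v \<le> pi/2" | "pi/2 < v"
    by linarith
  then show ?thesis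
  proof cases
    case 1 then show ?thesis using p2 assms by (intro exI[of _ "2*pi"]) auto
  next
    case 2 then show ?thesis using p1 assms by (intro exI[of _ "pi"]) auto
  next
    case 3 then show ?thesis using assms by (intro exI[of _ "0"]) auto
  next
    case 4 then show ?thesis using m assms by (intro exI[of _ "-pi"]) auto
  qed
qed

definition NN :: "real \<Rightarrow> real \<Rightarrow> real \<Rightarrow> real" where
  "NN a1 a2 t = a1 * (sin (3*t) + 5 * sin t) - a2 * (cos (3*t) + 5 * cos t)"

lemma NN_unique:
  assumes nz: "a1 \<noteq> 0 \<or> a2 \<noteq> 0" and t: "0 < t1" "t1 < pi" "0 < t2" "t2 < pi"
    and z: "NN a1 a2 t1 = 0" "NN a1 a2 t2 = 0"
  shows "t1 = t2"
proof -
  define r where "r = sqrt (a1^2 + a2^2)"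
  have "0 < a1^2 + a2^2" using nz by (auto simp: sum_power2_gt_zero_iff)
  then have r: "0 < r" unfolding r_def by simp
  have "(a1/r)^2 + (a2/r)^2 = 1" using r \<open>0 < a1^2 + a2^2\<close> nz unfolding r_def
    by (simp add: power_divide add_divide_distrib[symmetric])
  then obtain p where p: "0 \<le> p" "p < 2*pi" "a1/r = cos p" "a2/r = sin p"
    using sincos_total_2pi by blast
  have a1: "a1 = r * cos p" and a2: "a2 = r * sin p" using p r by (auto simp: field_simps)
  have NK: "NN a1 a2 t = r * KK p (t - p)" for t
    unfolding NN_def KK_def a1 a2
    by (simp add: algebra_simps sin_diff)
  have k1: "KK p (t1 - p) = 0" "KK p (t2 - p) = 0" using z NK r by auto
  obtain s1 where s1: "s1 \<in> {-pi,0,pi,2*pi}" "-(pi/2) \<le> t1 - p + s1" "t1 - p + s1 \<le> pi/2" "KK p (t1 - p + s1) = 0"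
    using KK_zero_shift[OF k1(1)] t p by auto
  obtain s2 where s2: "s2 \<in> {-pi,0,pi,2*pi}" "-(pi/2) \<le> t2 - p + s2" "t2 - p + s2 \<le> pi/2" "KK p (t2 - p + s2) = 0"
    using KK_zero_shift[OF k1(2)] t p by auto
  have "t1 - p + s1 = t2 - p + s2" using KK_window s1 s2 by blast
  then have e: "t1 - t2 = s2 - s1" by simp
  have "\<bar>t1 - t2\<bar> < pi" using t by auto
  then show ?thesis using e s1(1) s2(1) pi_gt_zero by auto
qed



lemma NN_ident:
  "(-8 * a1 * cos(2 * t) - 8 * a2 * sin(2 * t))  *  sin t - 3  *  (-4 * a1 * sin(2 * t) + 4 * a2 * cos(2 * t))  *  cos t
   = 2  *  NN a1 a2 t"
proof -
  have s: "sin t ^ 2 + cos t ^ 2 = 1" by simp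
  show ?thesis unfolding NN_def sin_double cos_double_cos sin3 cos_treble_cos
    using s by algebra
qed

definition DD :: "real \<Rightarrow> real \<Rightarrow> real \<Rightarrow> real \<Rightarrow> real" where
  "DD a1 a2 a3 t = -4 * a1 * sin(2 * t) + 4 * a2 * cos(2 * t) - 3/2 * a3 * sin t ^ 3"

lemma DD_three:
  assumes nz: "a1 \<noteq> 0 \<or> a2 \<noteq> 0" and o: "0 < x" "x < y" "y < z" "z < pi"
    and d: "DD a1 a2 a3 x = 0" "DD a1 a2 a3 y = 0" "DD a1 a2 a3 z = 0"
  shows False
proof -
  define P where "P t = -4 * a1 * sin(2 * t) + 4 * a2 * cos(2 * t)" for t
  define P' where "P' t = -8 * a1 * cos(2 * t) - 8 * a2 * sin(2 * t)" for t
  define Psi where "Psi t = P t / sin t ^ 3 - 3/2 * a3" for t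
  have sinpos: "0 < sin t" if "0 < t" "t < pi" for t using that sin_gt_zero by blast
  have Psi0: "Psi t = 0" if "0 < t" "t < pi" "DD a1 a2 a3 t = 0" for t
  proof -
    have "P t = 3/2 * a3 * sin t ^ 3" using that(3) unfolding DD_def P_def by simp
    then show ?thesis unfolding Psi_def using sinpos[OF that(1,2)] by simp
  qed
  have der: "(Psi has_real_derivative ((P' t  *  sin t ^ 3 - P t  *  (3  *  sin t ^ 2  *  cos t)) / (sin t ^ 3) ^ 2)) (at t)"
    if "0 < t" "t < pi" for t
  proof -
    have "sin t ^ 3 \<noteq> 0" using sinpos[OF that] by simp
    then show ?thesis unfolding Psi_def[abs_def] P_def P'_def
      by (auto intro!: derivative_eq_intros simp: algebra_simps power2_eq_square power3_eq_cube)
  qed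
  have zeroN: "NN a1 a2 t = 0" if "0 < t" "t < pi"
     "(P' t  *  sin t ^ 3 - P t  *  (3  *  sin t ^ 2  *  cos t)) / (sin t ^ 3) ^ 2 = 0" for t
  proof -
    have sp: "0 < sin t" using sinpos[OF that(1,2)] .
    have "P' t  *  sin t ^ 3 - P t  *  (3  *  sin t ^ 2  *  cos t) = 0" using that(3) sp by simp
    then have "sin t ^ 2  *  (P' t  *  sin t - 3  *  P t  *  cos t) = 0"
      by (simp add: algebra_simps power2_eq_square power3_eq_cube)
    then have "P' t  *  sin t - 3  *  P t  *  cos t = 0" using sp by simp
    then show ?thesis using NN_ident[of a1 t a2] unfolding P_def P'_def by simp
  qed
  obtain z1 where z1: "x < z1" "z1 < y" "(P' z1  *  sin z1 ^ 3 - P z1  *  (3  *  sin z1 ^ 2  *  cos z1)) / (sin z1 ^ 3) ^ 2 = 0"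
    using rolle'[of x y Psi "\<lambda>t. (P' t  *  sin t ^ 3 - P t  *  (3  *  sin t ^ 2  *  cos t)) / (sin t ^ 3) ^ 2"]
      o der Psi0 d by auto
  obtain z2 where z2: "y < z2" "z2 < z" "(P' z2  *  sin z2 ^ 3 - P z2  *  (3  *  sin z2 ^ 2  *  cos z2)) / (sin z2 ^ 3) ^ 2 = 0"
    using rolle'[of y z Psi "\<lambda>t. (P' t  *  sin t ^ 3 - P t  *  (3  *  sin t ^ 2  *  cos t)) / (sin t ^ 3) ^ 2"]
      o der Psi0 d by auto
  have "NN a1 a2 z1 = 0" using zeroN z1 o by auto
  moreover have "NN a1 a2 z2 = 0" using zeroN z2 o by auto
  ultimately have "z1 = z2" using NN_unique[OF nz] z1 z2 o by auto
  then show False using z1 z2 by simp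
qed

definition gg :: "real \<Rightarrow> real \<Rightarrow> real \<Rightarrow> real \<Rightarrow> real \<Rightarrow> real" where
  "gg a1 a2 a3 a4 t = a1  *  (2  *  cos (2  *  t) - 1) + a2  *  (2  *  sin (2  *  t)) + a3  *  zeta t + a4"

lemma gg_deriv: "(gg a1 a2 a3 a4 has_real_derivative DD a1 a2 a3 t) (at t)"
proof -
  have "(gg a1 a2 a3 a4 has_real_derivative
     (a1  *  (- (2  *  sin (2 * t))  *  2) + a2  *  (2  *  cos (2 * t)  *  2) + a3  *  (9/8  *  - sin t - 1/8  *  (- sin (3 * t)  *  3)))) (at t)"
    unfolding gg_def[abs_def] zeta_def
    by (auto intro!: derivative_eq_intros)
  moreover have "a1  *  (- (2  *  sin (2 * t))  *  2) + a2  *  (2  *  cos (2 * t)  *  2) + a3  *  (9/8  *  - sin t - 1/8  *  (- sin (3 * t)  *  3))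
     = DD a1 a2 a3 t"
    unfolding DD_def sin3 by (simp add: algebra_simps)
  ultimately show ?thesis by simp
qed

lemma gamma_zero_unique:
  assumes nz: "a1 \<noteq> 0 \<or> a2 \<noteq> 0"
    and nn: "\<And>t. 0 \<le> t \<Longrightarrow> t \<le> pi \<Longrightarrow> 0 \<le> gg a1 a2 a3 a4 t"
    and t: "0 < t1" "t1 < pi" "0 < t2" "t2 < pi"
    and z: "gg a1 a2 a3 a4 t1 = 0" "gg a1 a2 a3 a4 t2 = 0"
  shows "t1 = t2"
proof -
  have crit: "DD a1 a2 a3 t = 0" if "0 < t" "t < pi" "gg a1 a2 a3 a4 t = 0" for t
  proof (rule DERIV_local_min[OF gg_deriv])
    show "0 < min t (pi - t)" using that by simp
    show "\<forall>y. \<bar>t - y\<bar> < min t (pi - t) \<longrightarrow> gg a1 a2 a3 a4 t \<le> gg a1 a2 a3 a4 y"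
      using that nn by auto
  qed
  have main: False if ab: "0 < a" "a < b" "b < pi" "gg a1 a2 a3 a4 a = 0" "gg a1 a2 a3 a4 b = 0" for a b
  proof -
    obtain c where c: "a < c" "c < b" "DD a1 a2 a3 c = 0"
      using rolle'[of a b "gg a1 a2 a3 a4" "DD a1 a2 a3", OF \<open>a < b\<close> _ gg_deriv] ab by auto
    show False using DD_three[OF nz, of a c b a3] c crit ab by auto
  qed
  show ?thesis
    using main[of t1 t2] main[of t2 t1] t z by (cases "t1 < t2"; cases "t2 < t1") auto
qed



definition SS :: "(real^3) set" where
  "SS = curve_alpha ` {0..2*pi} \<union> curve_beta ` {0..2*pi} \<union> curve_gamma ` {0..pi}"

definition KC :: "(real^4) set" where "KC = cone_of (lift4 ` setC)"

lemma setC_SS: "setC = convex hull SS" by (simp add: setC_def SS_def)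

lemma KC_mem: "x \<in> KC \<longleftrightarrow> (\<exists>l c. 0 \<le> l \<and> c \<in> setC \<and> x = l *\<^sub>R lift4 c)"
  unfolding KC_def cone_of_def by auto

lemma inner_lift_comb: "a + b = 1 \<Longrightarrow> y \<bullet> lift4 (a *\<^sub>R p + b *\<^sub>R q) = a * (y \<bullet> lift4 p) + b * (y \<bullet> lift4 q)"
  by (simp add: lift4_comb inner_add_right)

lemma hull_nonneg:
  assumes "\<forall>p\<in>SS. 0 \<le> y \<bullet> lift4 p" "c \<in> setC"
  shows "0 \<le> y \<bullet> lift4 c"
proof -
  have cv: "convex {c. 0 \<le> y \<bullet> lift4 c}"
  proof (rule convexI)
    fix p q :: "real^3" and u v :: real
    assume "p \<in> {c. 0 \<le> y \<bullet> lift4 c}" "q \<in> {c. 0 \<le> y \<bullet> lift4 c}" "0 \<le> u" "0 \<le> v" "u + v = 1"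
    then show "u *\<^sub>R p + v *\<^sub>R q \<in> {c. 0 \<le> y \<bullet> lift4 c}"
      by (simp add: inner_lift_comb)
  qed
  have "setC \<subseteq> {c. 0 \<le> y \<bullet> lift4 c}"
    unfolding setC_SS using assms(1) by (intro hull_minimal cv) auto
  then show ?thesis using assms(2) by auto
qed

lemma dual_K_I:
  assumes "\<forall>p\<in>SS. 0 \<le> y \<bullet> lift4 p"
  shows "y \<in> dual_cone KC"
  unfolding dual_cone_def
proof safe
  fix x assume "x \<in> KC"
  then obtain l c where "0 \<le> l" "c \<in> setC" "x = l *\<^sub>R lift4 c" by (auto simp: KC_mem)
  then show "0 \<le> y \<bullet> x" using hull_nonneg[OF assms] by simp
qed

lemma SS_setC: "p \<in> SS \<Longrightarrow> p \<in> setC"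
  unfolding setC_SS by (rule hull_inc)

lemma lift_in_K: "p \<in> setC \<Longrightarrow> lift4 p \<in> KC"
  unfolding KC_mem by (rule exI[of _ 1]) auto

lemma SS_ne: "curve_alpha 0 \<in> SS" unfolding SS_def by auto

lemma K_zero: "0 \<in> KC"
  unfolding KC_mem using SS_setC[OF SS_ne] by (intro exI[of _ 0] exI[of _ "curve_alpha 0"]) auto

lemma K_scale: "x \<in> KC \<Longrightarrow> 0 \<le> m \<Longrightarrow> m *\<^sub>R x \<in> KC"
  unfolding KC_mem by (metis mult_nonneg_nonneg scaleR_scaleR)

lemma K_add: assumes "x \<in> KC" "y \<in> KC" shows "x + y \<in> KC"
proof -
  obtain l1 c1 where 1: "0 \<le> l1" "c1 \<in> setC" "x = l1 *\<^sub>R lift4 c1" using assms(1) by (auto simp: KC_mem)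
  obtain l2 c2 where 2: "0 \<le> l2" "c2 \<in> setC" "y = l2 *\<^sub>R lift4 c2" using assms(2) by (auto simp: KC_mem)
  show ?thesis
  proof (cases "l1 + l2 = 0")
    case True then have "l1 = 0" "l2 = 0" using 1 2 by auto
    then show ?thesis using 1 2 K_zero by simp
  next
    case False
    then have pos: "0 < l1 + l2" using 1 2 by auto
    define c where "c = (l1/(l1+l2)) *\<^sub>R c1 + (l2/(l1+l2)) *\<^sub>R c2"
    have "c \<in> setC" unfolding c_def setC_SS
      using 1 2 pos by (intro convexD[OF convex_convex_hull]) (auto simp: setC_SS add_divide_distrib[symmetric])
    moreover have "x + y = (l1 + l2) *\<^sub>R lift4 c"
      unfolding c_def using pos 1 2
      by (subst lift4_comb) (auto simp: add_divide_distrib[symmetric] scaleR_add_right)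
    ultimately show ?thesis unfolding KC_mem using pos by (intro exI[of _ "l1+l2"] exI[of _ c]) auto
  qed
qed

lemma convex_K: "convex KC"
  by (rule convexI) (auto intro!: K_add K_scale)

lemma face_prop:
  assumes "is_face F KC" "x \<in> KC" "y \<in> KC" "0 < a" "a < 1" "a *\<^sub>R x + (1 - a) *\<^sub>R y \<in> F"
  shows "x \<in> F" "y \<in> F"
  using assms unfolding is_face_def by blast+

lemma face_sub: "is_face F KC \<Longrightarrow> F \<subseteq> KC" unfolding is_face_def by blast

lemma face_zero:
  assumes "is_face F KC" "f \<in> F"
  shows "0 \<in> F"
proof -
  have "f \<in> KC" using assms face_sub by blast
  have "(1/2) *\<^sub>R (0::real^4) + (1 - 1/2) *\<^sub>R (2 *\<^sub>R f) \<in> F" using assms(2) by simp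
  then show ?thesis using face_prop(1)[OF assms(1) K_zero K_scale[OF \<open>f \<in> KC\<close>, of 2], of "1/2"]
    by simp
qed

lemma face_split:
  assumes F: "is_face F KC" and X: "X \<in> KC" and Y: "Y \<in> KC" and XY: "X + Y \<in> F"
  shows "X \<in> F \<and> Y \<in> F"
proof -
  have e: "(1/2) *\<^sub>R (2 *\<^sub>R X) + (1 - 1/2) *\<^sub>R (2 *\<^sub>R Y) \<in> F" using XY by (simp add: scaleR_add_right)
  have 2: "2 *\<^sub>R X \<in> F" "2 *\<^sub>R Y \<in> F"
    using face_prop[OF F K_scale[OF X, of 2] K_scale[OF Y, of 2], of "1/2"] e by simp_all
  have 0: "0 \<in> F" using face_zero[OF F XY] .
  have cF: "convex F" using F unfolding is_face_def by blast
  have "(1/2) *\<^sub>R (2 *\<^sub>R X) + (1/2) *\<^sub>R (0::real^4) \<in> F"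
    by (rule convexD[OF cF 2(1) 0]) auto
  moreover have "(1/2) *\<^sub>R (2 *\<^sub>R Y) + (1/2) *\<^sub>R (0::real^4) \<in> F"
    by (rule convexD[OF cF 2(2) 0]) auto
  ultimately show ?thesis by simp
qed

lemma face_scale:
  assumes F: "is_face F KC" and X: "X \<in> F" and m: "0 < m"
  shows "m *\<^sub>R X \<in> F"
proof -
  have XK: "X \<in> KC" using F X face_sub by blast
  have 0: "0 \<in> F" using face_zero[OF F X] .
  have cF: "convex F" using F unfolding is_face_def by blast
  show ?thesis
  proof (cases "m \<le> 1")
    case True
    have "m *\<^sub>R X + (1 - m) *\<^sub>R (0::real^4) \<in> F" by (rule convexD[OF cF X 0]) (use m True in auto)
    then show ?thesis by simp
  next
    case False
    have "(1/m) *\<^sub>R (m *\<^sub>R X) + (1 - 1/m) *\<^sub>R 0 \<in> F" using m X by simp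
    then show ?thesis
      using face_prop(1)[OF F K_scale[OF XK, of m] K_zero, of "1/m"] m False by simp
  qed
qed

lemma face_sum:
  assumes F: "is_face F KC" and fin: "finite s"
  shows "(\<forall>x\<in>s. g x \<in> KC) \<Longrightarrow> sum g s \<in> F \<Longrightarrow> \<forall>x\<in>s. g x \<in> F"
  using fin
proof (induction s rule: finite_induct)
  case empty then show ?case by simp
next
  case (insert y s)
  have sK: "sum g s \<in> KC"
    using insert(4) by (induction s rule: infinite_finite_induct) (auto intro: K_zero K_add)
  have "g y \<in> F \<and> sum g s \<in> F"
    using face_split[OF F _ sK] insert by auto
  then show ?case using insert by auto
qed

lemma lift4_sum:
  assumes "finite s" "sum u s = 1"
  shows "lift4 (\<Sum>x\<in>s. u x *\<^sub>R x) = (\<Sum>x\<in>s. u x *\<^sub>R lift4 x)"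
  using assms by (simp add: vec_eq_iff forall_4 sum_distrib_left[symmetric])

lemma face_perp:
  assumes F: "is_face F KC" and w: "\<forall>e\<in>SS. lift4 e \<in> F \<longrightarrow> w \<bullet> lift4 e = 0" and f: "f \<in> F"
  shows "w \<bullet> f = 0"
proof -
  have "f \<in> KC" using F f face_sub by blast
  then obtain l c where lc: "0 \<le> l" "c \<in> setC" "f = l *\<^sub>R lift4 c" by (auto simp: KC_mem)
  obtain s u where su: "finite s" "s \<subseteq> SS" "\<forall>x\<in>s. 0 \<le> u x" "sum u s = 1" "(\<Sum>x\<in>s. u x *\<^sub>R x) = c"
    using lc(2) unfolding setC_SS convex_hull_explicit by blast
  have fs: "f = (\<Sum>x\<in>s. (l * u x) *\<^sub>R lift4 x)"
    using lc su lift4_sum[OF su(1,4)] by (simp add: scaleR_sum_right)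
  have inK: "\<forall>x\<in>s. (l * u x) *\<^sub>R lift4 x \<in> KC"
    using su lc by (auto intro!: K_scale lift_in_K SS_setC)
  have inF: "\<forall>x\<in>s. (l * u x) *\<^sub>R lift4 x \<in> F"
    using face_sum[OF F su(1) inK] fs f by simp
  have "w \<bullet> ((l * u x) *\<^sub>R lift4 x) = 0" if "x \<in> s" for x
  proof (cases "l * u x = 0")
    case True then show ?thesis by simp
  next
    case False
    then have pos: "0 < l * u x" using lc su that by (simp add: less_le)
    have "(1 / (l * u x)) *\<^sub>R ((l * u x) *\<^sub>R lift4 x) \<in> F"
      using face_scale[OF F _ , of "(l * u x) *\<^sub>R lift4 x" "1 / (l * u x)"] inF that pos by auto
    moreover have "l \<noteq> 0" "u x \<noteq> 0" using pos by auto
    ultimately have "lift4 x \<in> F" by simp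
    then show ?thesis using w su that by auto
  qed
  then show ?thesis unfolding fs inner_sum_right by (intro sum.neutral) blast
qed

lemma is_face_face_of: assumes F: "is_face F KC" shows "F face_of KC"
proof -
  have 3: "a \<in> F \<and> b \<in> F" if ab: "a \<in> KC" "b \<in> KC" "x \<in> F" "x \<in> open_segment a b" for a b x
  proof -
    obtain u where u: "0 < u" "u < 1" "x = (1 - u) *\<^sub>R a + u *\<^sub>R b" using ab(4) unfolding in_segment by blast
    have "(1 - u) *\<^sub>R a + (1 - (1 - u)) *\<^sub>R b \<in> F" using u ab by simp
    then show "a \<in> F \<and> b \<in> F" using face_prop[OF F ab(1,2), of "1 - u"] u by simp
  qed
  have "convex F" using F unfolding is_face_def by blast
  then show ?thesis unfolding face_of_def using face_sub[OF F] 3 by blast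
qed

lemma separation:
  assumes F: "is_face F KC" and ne: "F \<noteq> {}" and nK: "F \<noteq> KC"
  shows "\<exists>a. (\<forall>p\<in>SS. 0 \<le> a \<bullet> lift4 p) \<and> (\<forall>f\<in>F. a \<bullet> f = 0) \<and> (\<exists>p\<in>SS. a \<bullet> lift4 p \<noteq> 0)"
proof -
  have cF: "convex F" using F unfolding is_face_def by blast
  obtain x where x: "x \<in> rel_interior F" using rel_interior_eq_empty[OF cF] ne by blast
  have xF: "x \<in> F" using x rel_interior_subset by blast
  have "x \<in> rel_frontier KC" using face_of_subset_rel_frontier[OF is_face_face_of[OF F] nK] xF by blast
  then have xc: "x \<in> closure KC" "x \<notin> rel_interior KC" unfolding rel_frontier_def by auto
  obtain a where a: "a \<noteq> 0" "\<And>y. y \<in> closure KC \<Longrightarrow> a \<bullet> x \<le> a \<bullet> y"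
      "\<And>y. y \<in> rel_interior KC \<Longrightarrow> a \<bullet> x < a \<bullet> y"
    using supporting_hyperplane_relative_frontier[OF convex_K xc] by blast
  have xK: "x \<in> KC" using xF F face_sub by blast
  have "a \<bullet> x \<le> a \<bullet> 0" using a(2)[of 0] K_zero closure_subset by (meson subsetD)
  moreover have "a \<bullet> x \<le> a \<bullet> (2 *\<^sub>R x)" using a(2) K_scale[OF xK, of 2] closure_subset by (meson subsetD zero_le_numeral)
  ultimately have ax: "a \<bullet> x = 0" by simp
  have dual: "0 \<le> a \<bullet> y" if "y \<in> KC" for y
  proof -
    have "y \<in> closure KC" using that closure_subset by blast
    then show ?thesis using a(2)[of y] ax by simp
  qed
  have perp: "a \<bullet> f = 0" if fF: "f \<in> F" for f
  proof -
    have "\<forall>z\<in>F. \<exists>e. e > 1 \<and> (1 - e) *\<^sub>R z + e *\<^sub>R x \<in> F"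
      using convex_rel_interior_iff[OF cF ne, THEN iffD1, OF x] .
    then obtain e where e: "e > 1" "(1 - e) *\<^sub>R f + e *\<^sub>R x \<in> F"
      using fF by blast
    have "(1 - e) *\<^sub>R f + e *\<^sub>R x \<in> KC" using e(2) face_sub[OF F] by blast
    then have "0 \<le> a \<bullet> ((1 - e) *\<^sub>R f + e *\<^sub>R x)" by (rule dual)
    then have "0 \<le> (1 - e) * (a \<bullet> f)" using ax by (simp add: inner_add_right)
    then have "a \<bullet> f \<le> 0" using e(1) by (auto simp: zero_le_mult_iff)
    moreover have "0 \<le> a \<bullet> f" using dual fF face_sub[OF F] by blast
    ultimately show ?thesis by simp
  qed
  have "\<exists>p\<in>SS. a \<bullet> lift4 p \<noteq> 0"
  proof (rule ccontr)
    assume "\<not> ?thesis"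
    then have "\<forall>p\<in>SS. 0 \<le> (-a) \<bullet> lift4 p" by simp
    then have na: "-a \<in> dual_cone KC" by (rule dual_K_I)
    have "KC \<noteq> {}" using K_zero by blast
    then obtain y where y: "y \<in> rel_interior KC" using rel_interior_eq_empty[OF convex_K] by blast
    then have "0 < a \<bullet> y" using a(3)[of y] ax by simp
    moreover have "y \<in> KC" using y rel_interior_subset by blast
    then have "0 \<le> (-a) \<bullet> y" using na unfolding dual_cone_def by blast
    ultimately show False by simp
  qed
  moreover have "\<forall>p\<in>SS. 0 \<le> a \<bullet> lift4 p" using dual lift_in_K SS_setC by blast
  ultimately show ?thesis using perp by blast
qed



lemma one_minus_cos_le: "0 \<le> (x::real) \<Longrightarrow> 1 - cos x \<le> x"
proof -
  assume x: "0 \<le> x"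
  have "cos x = cos (2 * (x/2))" by simp
  also have "\<dots> = 1 - 2 * sin (x/2) ^ 2" by (rule cos_double_sin)
  finally have e: "1 - cos x = 2 * sin (x/2) ^ 2" by simp
  have "sin (x/2) ^ 2 = \<bar>sin (x/2)\<bar> * \<bar>sin (x/2)\<bar>" by (metis abs_mult_self_eq power2_eq_square)
  also have "\<dots> \<le> \<bar>sin (x/2)\<bar> * 1" using abs_sin_le_one[of "x/2"] by (intro mult_left_mono) auto
  finally have "sin (x/2) ^ 2 \<le> \<bar>sin (x/2)\<bar>" by simp
  also have "\<dots> \<le> x/2" using abs_sin_x_le_abs_x[of "x/2"] x by simp
  finally show ?thesis using e by simp
qed

lemma cos_eq_1_0pi: "0 \<le> t \<Longrightarrow> t \<le> pi \<Longrightarrow> cos t = 1 \<Longrightarrow> t = 0"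
  using cos_monotone_0_pi[of 0 t] by fastforce

lemma zeta_le1: "zeta t \<le> 1"
proof -
  have "0 \<le> 2 + cos t" using cos_ge_minus_one[of t] by linarith
  then have "0 \<le> (1 - cos t)^2 * (2 + cos t) / 2" by simp
  then show ?thesis using one_minus_zeta[of t] by simp
qed

lemma zeta_ge1: "-1 \<le> zeta t"
proof -
  have "0 \<le> 2 - cos t" using cos_le_one[of t] by linarith
  then have "0 \<le> (1 + cos t)^2 * (2 - cos t) / 2" by simp
  then show ?thesis using one_plus_zeta[of t] by simp
qed

lemma zeta_eq1: "0 \<le> t \<Longrightarrow> t \<le> pi \<Longrightarrow> zeta t = 1 \<Longrightarrow> t = 0"
proof -
  assume t: "0 \<le> t" "t \<le> pi" "zeta t = 1"
  then have "(1 - cos t)^2 * (2 + cos t) = 0" using one_minus_zeta[of t] by simp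
  moreover have "2 + cos t \<noteq> 0" using cos_ge_minus_one[of t] by linarith
  ultimately have "cos t = 1" by simp
  then show ?thesis using cos_eq_1_0pi t by blast
qed

lemma mul_le_abs:
  fixes c x :: real
  assumes "\<bar>c\<bar> \<le> 1" shows "c * x \<le> \<bar>x\<bar>"
proof -
  have "c * x \<le> \<bar>c * x\<bar>" by simp
  also have "\<dots> = \<bar>c\<bar> * \<bar>x\<bar>" by (rule abs_mult)
  also have "\<dots> \<le> 1 * \<bar>x\<bar>" using assms by (intro mult_right_mono) auto
  finally show ?thesis by simp
qed

lemma bound_lemma:
  assumes cs: "c0^2 + s0^2 = 1"
  shows "\<exists>l\<ge>0. \<forall>t. 0 \<le> t \<and> t \<le> pi \<longrightarrow> c0 * (2 * cos (2 * t) - 1) + 2 * s0 * sin (2 * t) - 1 \<le> l * (1 - zeta t)"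
proof -
  have "c0^2 \<le> 1" "s0^2 \<le> 1" using cs zero_le_power2[of c0] zero_le_power2[of s0] by linarith+
  then have c1: "\<bar>c0\<bar> \<le> 1" "\<bar>s0\<bar> \<le> 1" by (simp_all add: abs_square_le_1)
  show ?thesis
  proof (cases "c0 = 1")
    case True
    then have "s0 = 0" using cs by simp
    have "c0 * (2 * cos (2 * t) - 1) + 2 * s0 * sin (2 * t) - 1 \<le> 0 * (1 - zeta t)" for t
      using True \<open>s0 = 0\<close> cos_le_one[of "2*t"] by simp
    then show ?thesis by blast
  next
    case False
    then have c0: "c0 < 1" using c1 by auto
    define d where "d = (1 - c0) / 8"
    have d: "0 < d" "d \<le> 1/4" using c0 c1 unfolding d_def by auto
    have cd: "cos d < 1" using cos_monotone_0_pi[of 0 d] d pi_ge_two by simp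
    define m where "m = (1 - cos d)^2 / 2"
    have m: "0 < m" unfolding m_def using cd by simp
    show ?thesis
    proof (intro exI[of _ "4/m"] conjI allI impI)
      show "0 \<le> 4/m" using m by simp
      fix t assume t: "0 \<le> t \<and> t \<le> pi"
      have zn: "0 \<le> 1 - zeta t" using zeta_le1[of t] by simp
      show "c0 * (2 * cos (2 * t) - 1) + 2 * s0 * sin (2 * t) - 1 \<le> 4 / m * (1 - zeta t)"
      proof (cases "t \<le> d")
        case True
        have a: "\<bar>cos (2*t) - 1\<bar> \<le> 2 * t" using one_minus_cos_le[of "2*t"] t cos_le_one[of "2*t"] by simp
        have b: "\<bar>sin (2*t)\<bar> \<le> 2 * t" using abs_sin_x_le_abs_x[of "2*t"] t by simp
        have "c0 * (2 * cos (2 * t) - 1) + 2 * s0 * sin (2 * t) - 1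
             = (c0 - 1) + 2 * (c0 * (cos (2*t) - 1)) + 2 * (s0 * sin (2*t))" by (simp add: algebra_simps)
        also have "\<dots> \<le> (c0 - 1) + 2 * (2 * t) + 2 * (2 * t)"
        proof -
          have "c0 * (cos (2*t) - 1) \<le> 2 * t"
            using mul_le_abs[OF c1(1), of "cos (2*t) - 1"] a by linarith
          moreover have "s0 * sin (2*t) \<le> 2 * t"
            using mul_le_abs[OF c1(2), of "sin (2*t)"] b by linarith
          ultimately show ?thesis by simp
        qed
        also have "\<dots> \<le> 0" using True unfolding d_def by simp
        finally have "c0 * (2 * cos (2 * t) - 1) + 2 * s0 * sin (2 * t) - 1 \<le> 0" .
        moreover have "0 \<le> 4/m * (1 - zeta t)" using zn m by simp
        ultimately show ?thesis by linarith
      next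
        case False
        have "cos t \<le> cos d" using cos_monotone_0_pi_le[of d t] False t d by linarith
        then have "0 \<le> 1 - cos d" "1 - cos d \<le> 1 - cos t" using cd by linarith+
        then have p: "(1 - cos d)^2 \<le> (1 - cos t)^2" by (simp add: power_mono)
        have "1 \<le> 2 + cos t" using cos_ge_minus_one[of t] by linarith
        then have "(1 - cos t)^2 * 1 \<le> (1 - cos t)^2 * (2 + cos t)" by (intro mult_left_mono) auto
        then have "(1 - cos d)^2 \<le> (1 - cos t)^2 * (2 + cos t)" using p by linarith
        then have "m \<le> 1 - zeta t" unfolding m_def one_minus_zeta by (intro divide_right_mono) auto
        then have "m * (4/m) \<le> (1 - zeta t) * (4/m)" using m by (intro mult_right_mono) auto
        then have "4 \<le> 4/m * (1 - zeta t)" using m by (simp add: mult.commute)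
        moreover have "c0 * (2 * cos (2 * t) - 1) + 2 * s0 * sin (2 * t) - 1 \<le> 4"
        proof -
          have "\<bar>2 * cos (2 * t) - 1\<bar> \<le> 3" using cos_le_one[of "2*t"] cos_ge_minus_one[of "2*t"] unfolding abs_le_iff by linarith
          then have "c0 * (2 * cos (2 * t) - 1) \<le> 3"
            using mul_le_abs[OF c1(1), of "2 * cos (2 * t) - 1"] by linarith
          moreover have "s0 * sin (2 * t) \<le> 1"
            using mul_le_abs[OF c1(2), of "sin (2*t)"] abs_sin_le_one[of "2*t"] by linarith
          ultimately show ?thesis by simp
        qed
        ultimately show ?thesis by simp
      qed
    qed
  qed
qed



lemma SS_cases:
  assumes "q \<in> SS"
  obtains t where "0 \<le> t" "t \<le> 2*pi" "q = curve_alpha t"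
    | t where "0 \<le> t" "t \<le> 2*pi" "q = curve_beta t"
    | t where "0 \<le> t" "t \<le> pi" "q = curve_gamma t"
  using assms unfolding SS_def by auto

lemma gamma3: "curve_gamma t $ 3 = zeta t" by (simp add: zeta_def)

lemma cos_one_small: "-2*pi < x \<Longrightarrow> x < 2*pi \<Longrightarrow> cos x = 1 \<Longrightarrow> x = 0"
proof -
  assume x: "-2*pi < x" "x < 2*pi" "cos x = 1"
  then obtain n :: int where n: "x = real_of_int n * 2 * pi" using cos_one_2pi_int by blast
  have A: "real_of_int n < 1"
  proof (rule ccontr)
    assume "\<not> real_of_int n < 1"
    then have "1 * (2*pi) \<le> real_of_int n * (2*pi)" by (intro mult_right_mono) auto
    then show False using x n by (simp add: mult.assoc)
  qed
  have B: "-1 < real_of_int n"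
  proof (rule ccontr)
    assume "\<not> -1 < real_of_int n"
    then have "real_of_int n * (2*pi) \<le> (-1) * (2*pi)" by (intro mult_right_mono) auto
    then show False using x n by (simp add: mult.assoc)
  qed
  from A B have "real_of_int n < 1" "-1 < real_of_int n" .
  then have "n = 0" by linarith
  then show "x = 0" using n by simp
qed

lemma unit_eq:
  assumes "cos (a::real) * cos b + sin a * sin b = 1"
  shows "cos a = cos b \<and> sin a = sin b"
proof -
  have "(cos a - cos b)^2 + (sin a - sin b)^2 = (sin a ^2 + cos a^2) + (sin b^2 + cos b^2) - 2 * (cos a * cos b + sin a * sin b)"
    by (simp add: power2_eq_square algebra_simps)
  also have "\<dots> = 0" using assms by simp
  finally show ?thesis by (simp add: sum_power2_eq_zero_iff)
qed

lemma alpha_exposer: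
  "\<exists>l\<ge>0. (\<forall>q\<in>SS. cos th * q$1 + sin th * q$2 + l * q$3 \<le> 1 + l) \<and>
          (\<forall>q\<in>SS. cos th * q$1 + sin th * q$2 + l * q$3 = 1 + l \<longrightarrow> q = curve_alpha th)"
proof -
  obtain l0 where l0: "0 \<le> l0" "\<And>t. 0 \<le> t \<Longrightarrow> t \<le> pi \<Longrightarrow>
      cos th * (2 * cos (2 * t) - 1) + 2 * sin th * sin (2 * t) - 1 \<le> l0 * (1 - zeta t)"
    using bound_lemma[of "cos th" "sin th"] by auto
  define l where "l = l0 + 1"
  have le: "cos th * q$1 + sin th * q$2 + l * q$3 \<le> 1 + l \<and>
      (cos th * q$1 + sin th * q$2 + l * q$3 = 1 + l \<longrightarrow> q = curve_alpha th)" if q: "q \<in> SS" for q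
    using q
  proof (cases rule: SS_cases)
    case (1 t)
    have e: "cos th * q$1 + sin th * q$2 + l * q$3 = cos (th - t) + l" using 1 by (simp add: cos_diff)
    have "cos (th - t) + l = 1 + l \<longrightarrow> q = curve_alpha th"
    proof
      assume "cos (th - t) + l = 1 + l"
      then have "cos t * cos th + sin t * sin th = 1" by (simp add: cos_diff mult.commute)
      then have "cos t = cos th \<and> sin t = sin th" by (rule unit_eq)
      then show "q = curve_alpha th" using 1 by (simp add: vec3_eq)
    qed
    then show ?thesis using e by simp
  next
    case (2 t)
    have "cos th * q$1 + sin th * q$2 + l * q$3 = cos (th - t) - l" using 2 by (simp add: cos_diff)
    moreover have "cos (th - t) - l < 1 + l" using l0(1) cos_le_one[of "th - t"] unfolding l_def by linarith
    ultimately show ?thesis by simp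
  next
    case (3 t)
    have b: "cos th * (2 * cos (2 * t) - 1) + 2 * sin th * sin (2 * t) - 1 \<le> l0 * (1 - zeta t)"
      using l0(2) 3 by auto
    have v: "cos th * q$1 + sin th * q$2 + l * q$3 = cos th * (2 * cos (2 * t) - 1) + 2 * sin th * sin (2 * t) + (l0 + 1) * zeta t"
      using 3 unfolding l_def by (simp add: zeta_def algebra_simps)
    have z1: "zeta t \<le> 1" by (rule zeta_le1)
    have ub: "cos th * q$1 + sin th * q$2 + l * q$3 \<le> 1 + l0 + zeta t"
      using v b by (simp add: algebra_simps)
    have "cos th * q$1 + sin th * q$2 + l * q$3 = 1 + l \<longrightarrow> q = curve_alpha th"
    proof
      assume eq: "cos th * q$1 + sin th * q$2 + l * q$3 = 1 + l"
      then have "zeta t = 1" using ub z1 unfolding l_def by linarith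
      then have t0: "t = 0" using zeta_eq1 3 by blast
      then have q0: "q = curve_alpha 0" using 3 gamma0 by simp
      then have "cos th + l = 1 + l" using eq by simp
      then have "cos th = 1" by simp
      moreover then have "sin th = 0" using sin_cos_squared_add[of th] by simp
      ultimately show "q = curve_alpha th" using q0 by (simp add: vec3_eq)
    qed
    moreover have "cos th * q$1 + sin th * q$2 + l * q$3 \<le> 1 + l" using ub z1 unfolding l_def by linarith
    ultimately show ?thesis by simp
  qed
  show ?thesis using le l0(1) unfolding l_def by (intro exI[of _ "l0 + 1"]) auto
qed

lemma pi_minus_trig: "cos (2 * (pi - t)) = cos (2 * t)" "sin (2 * (pi - t)) = - sin (2 * t)"
  by (simp_all add: right_diff_distrib cos_diff sin_diff)

lemma beta_exposer:
  "\<exists>l\<ge>0. (\<forall>q\<in>SS. cos th * q$1 + sin th * q$2 - l * q$3 \<le> 1 + l) \<and>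
          (\<forall>q\<in>SS. cos th * q$1 + sin th * q$2 - l * q$3 = 1 + l \<longrightarrow> q = curve_beta th)"
proof -
  obtain l0 where l0: "0 \<le> l0" "\<And>t. 0 \<le> t \<Longrightarrow> t \<le> pi \<Longrightarrow>
      cos th * (2 * cos (2 * t) - 1) + 2 * (- sin th) * sin (2 * t) - 1 \<le> l0 * (1 - zeta t)"
    using bound_lemma[of "cos th" "- sin th"] by auto
  define l where "l = l0 + 1"
  have le: "cos th * q$1 + sin th * q$2 - l * q$3 \<le> 1 + l \<and>
      (cos th * q$1 + sin th * q$2 - l * q$3 = 1 + l \<longrightarrow> q = curve_beta th)" if q: "q \<in> SS" for q
    using q
  proof (cases rule: SS_cases)
    case (2 t)
    have e: "cos th * q$1 + sin th * q$2 - l * q$3 = cos (th - t) + l" using 2 by (simp add: cos_diff)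
    have "cos (th - t) + l = 1 + l \<longrightarrow> q = curve_beta th"
    proof
      assume "cos (th - t) + l = 1 + l"
      then have "cos t * cos th + sin t * sin th = 1" by (simp add: cos_diff mult.commute)
      then have "cos t = cos th \<and> sin t = sin th" by (rule unit_eq)
      then show "q = curve_beta th" using 2 by (simp add: vec3_eq)
    qed
    then show ?thesis using e by simp
  next
    case (1 t)
    have "cos th * q$1 + sin th * q$2 - l * q$3 = cos (th - t) - l" using 1 by (simp add: cos_diff)
    moreover have "cos (th - t) - l < 1 + l" using l0(1) cos_le_one[of "th - t"] unfolding l_def by linarith
    ultimately show ?thesis by simp
  next
    case (3 t)
    have b0: "cos th * (2 * cos (2 * (pi - t)) - 1) + 2 * (- sin th) * sin (2 * (pi - t)) - 1 \<le> l0 * (1 - zeta (pi - t))"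
      using l0(2)[of "pi - t"] 3 by auto
    then have b: "cos th * (2 * cos (2 * t) - 1) + 2 * sin th * sin (2 * t) - 1 \<le> l0 * (1 + zeta t)"
      unfolding pi_minus_trig zeta_pi_minus by simp
    have v: "cos th * q$1 + sin th * q$2 - l * q$3 = cos th * (2 * cos (2 * t) - 1) + 2 * sin th * sin (2 * t) - (l0 + 1) * zeta t"
      using 3 unfolding l_def by (simp add: zeta_def algebra_simps)
    have z1: "-1 \<le> zeta t" by (rule zeta_ge1)
    have ub: "cos th * q$1 + sin th * q$2 - l * q$3 \<le> 1 + l0 - zeta t"
      using v b by (simp add: algebra_simps)
    have "cos th * q$1 + sin th * q$2 - l * q$3 = 1 + l \<longrightarrow> q = curve_beta th"
    proof
      assume eq: "cos th * q$1 + sin th * q$2 - l * q$3 = 1 + l"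
      then have "zeta t = -1" using ub z1 unfolding l_def by linarith
      then have "zeta (pi - t) = 1" using zeta_pi_minus[of t] by simp
      then have "pi - t = 0" using zeta_eq1[of "pi - t"] 3 by auto
      then have "t = pi" by simp
      then have q0: "q = curve_beta 0" using 3 gammapi by simp
      then have "cos th + l = 1 + l" using eq by simp
      then have "cos th = 1" by simp
      moreover then have "sin th = 0" using sin_cos_squared_add[of th] by simp
      ultimately show "q = curve_beta th" using q0 by (simp add: vec3_eq)
    qed
    moreover have "cos th * q$1 + sin th * q$2 - l * q$3 \<le> 1 + l" using ub z1 unfolding l_def by linarith
    ultimately show ?thesis by simp
  qed
  show ?thesis using le l0(1) unfolding l_def by (intro exI[of _ "l0 + 1"]) auto
qed

lemma gamma_exposer:
  assumes t0: "0 < t0" "t0 < pi"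
  shows "(\<forall>q\<in>SS. cos (2*t0) * q$1 + sin (2*t0) * q$2 \<le> 2 - cos (2*t0)) \<and>
         (\<forall>q\<in>SS. cos (2*t0) * q$1 + sin (2*t0) * q$2 = 2 - cos (2*t0) \<longrightarrow> q = curve_gamma t0)"
proof -
  have c1: "cos (2*t0) < 1"
  proof -
    have "cos (2*t0) \<noteq> 1" using cos_one_small[of "2*t0"] t0 by auto
    then show ?thesis using cos_le_one[of "2*t0"] by linarith
  qed
  have le: "cos (2*t0) * q$1 + sin (2*t0) * q$2 \<le> 2 - cos (2*t0) \<and>
      (cos (2*t0) * q$1 + sin (2*t0) * q$2 = 2 - cos (2*t0) \<longrightarrow> q = curve_gamma t0)" if q: "q \<in> SS" for q
    using q
  proof (cases rule: SS_cases)
    case (1 t)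
    have e: "cos (2*t0) * q$1 + sin (2*t0) * q$2 = cos (2*t0 - t)" using 1 by (simp add: cos_diff)
    have "cos (2*t0 - t) < 2 - cos (2*t0)" using c1 cos_le_one[of "2*t0 - t"] by linarith
    then show ?thesis using e by simp
  next
    case (2 t)
    have e: "cos (2*t0) * q$1 + sin (2*t0) * q$2 = cos (2*t0 - t)" using 2 by (simp add: cos_diff)
    have "cos (2*t0 - t) < 2 - cos (2*t0)" using c1 cos_le_one[of "2*t0 - t"] by linarith
    then show ?thesis using e by simp
  next
    case (3 t)
    have v: "cos (2*t0) * q$1 + sin (2*t0) * q$2 = 2 * cos (2*t - 2*t0) - cos (2*t0)"
      using 3 by (simp add: cos_diff algebra_simps)
    have "2 * cos (2*t - 2*t0) - cos (2*t0) = 2 - cos (2*t0) \<longrightarrow> q = curve_gamma t0"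
    proof
      assume "2 * cos (2*t - 2*t0) - cos (2*t0) = 2 - cos (2*t0)"
      then have "cos (2*t - 2*t0) = 1" by simp
      then have "2*t - 2*t0 = 0" using cos_one_small[of "2*t - 2*t0"] 3 t0 by auto
      then show "q = curve_gamma t0" using 3 by simp
    qed
    then show ?thesis using v cos_le_one[of "2*t - 2*t0"] by auto
  qed
  then show ?thesis by blast
qed

lemma exposer:
  assumes p: "p \<in> SS"
  shows "\<exists>h. (\<forall>q\<in>SS. 0 \<le> h \<bullet> lift4 q) \<and> h \<bullet> lift4 p = 0 \<and> (\<forall>q\<in>SS. h \<bullet> lift4 q = 0 \<longrightarrow> q = p)"
proof -
  have A: ?thesis if "p = curve_alpha th" for th
  proof -
    obtain l where l: "0 \<le> l" "\<forall>q\<in>SS. cos th * q$1 + sin th * q$2 + l * q$3 \<le> 1 + l"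
      "\<forall>q\<in>SS. cos th * q$1 + sin th * q$2 + l * q$3 = 1 + l \<longrightarrow> q = curve_alpha th"
      using alpha_exposer[of th] by blast
    define h where "h = (vector [- cos th, - sin th, - l, 1 + l] :: real^4)"
    have hq: "h \<bullet> lift4 q = (1 + l) - (cos th * q$1 + sin th * q$2 + l * q$3)" for q
      unfolding h_def inner_lift by simp
    have 1: "\<forall>q\<in>SS. 0 \<le> h \<bullet> lift4 q" using l(2) by (simp add: hq)
    have 2: "h \<bullet> lift4 (curve_alpha th) = 0" by (simp add: hq sin_cos_squared_add3)
    have 3: "\<forall>q\<in>SS. h \<bullet> lift4 q = 0 \<longrightarrow> q = curve_alpha th"
    proof (intro ballI impI)
      fix q assume q: "q \<in> SS" "h \<bullet> lift4 q = 0"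
      then have "cos th * q$1 + sin th * q$2 + l * q$3 = 1 + l" by (simp add: hq)
      then show "q = curve_alpha th" using l(3) q(1) by blast
    qed
    show ?thesis using 1 2 3 that by blast
  qed
  have B: ?thesis if "p = curve_beta th" for th
  proof -
    obtain l where l: "0 \<le> l" "\<forall>q\<in>SS. cos th * q$1 + sin th * q$2 - l * q$3 \<le> 1 + l"
      "\<forall>q\<in>SS. cos th * q$1 + sin th * q$2 - l * q$3 = 1 + l \<longrightarrow> q = curve_beta th"
      using beta_exposer[of th] by blast
    define h where "h = (vector [- cos th, - sin th, l, 1 + l] :: real^4)"
    have hq: "h \<bullet> lift4 q = (1 + l) - (cos th * q$1 + sin th * q$2 - l * q$3)" for q
      unfolding h_def inner_lift by simp
    have 1: "\<forall>q\<in>SS. 0 \<le> h \<bullet> lift4 q" using l(2) by (simp add: hq)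
    have 2: "h \<bullet> lift4 (curve_beta th) = 0" by (simp add: hq sin_cos_squared_add3)
    have 3: "\<forall>q\<in>SS. h \<bullet> lift4 q = 0 \<longrightarrow> q = curve_beta th"
    proof (intro ballI impI)
      fix q assume q: "q \<in> SS" "h \<bullet> lift4 q = 0"
      then have "cos th * q$1 + sin th * q$2 - l * q$3 = 1 + l" by (simp add: hq)
      then show "q = curve_beta th" using l(3) q(1) by blast
    qed
    show ?thesis using 1 2 3 that by blast
  qed
  have C: ?thesis if "p = curve_gamma t0" "0 < t0" "t0 < pi" for t0
  proof -
    note g = gamma_exposer[OF that(2,3)]
    define h where "h = (vector [- cos (2*t0), - sin (2*t0), 0, 2 - cos (2*t0)] :: real^4)"
    have hq: "h \<bullet> lift4 q = (2 - cos (2*t0)) - (cos (2*t0) * q$1 + sin (2*t0) * q$2)" for q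
      unfolding h_def inner_lift by simp
    have 1: "\<forall>q\<in>SS. 0 \<le> h \<bullet> lift4 q" using g by (simp add: hq)
    have "cos (2*t0) * (2 * cos (2*t0) - 1) + sin (2*t0) * (2 * sin (2*t0)) = 2 * (cos (2*t0) * cos (2*t0) + sin (2*t0) * sin (2*t0)) - cos (2*t0)"
      by (simp only: algebra_simps)
    also have "\<dots> = 2 - cos (2*t0)" by (simp only: sin_cos_squared_add3)
    finally have e2: "cos (2*t0) * (2 * cos (2*t0) - 1) + sin (2*t0) * (2 * sin (2*t0)) = 2 - cos (2*t0)" .
    have 2: "h \<bullet> lift4 (curve_gamma t0) = 0" unfolding hq gamma_comp e2 by simp
    have 3: "\<forall>q\<in>SS. h \<bullet> lift4 q = 0 \<longrightarrow> q = curve_gamma t0"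
    proof (intro ballI impI)
      fix q assume q: "q \<in> SS" "h \<bullet> lift4 q = 0"
      then have "cos (2*t0) * q$1 + sin (2*t0) * q$2 = 2 - cos (2*t0)" by (simp add: hq)
      then show "q = curve_gamma t0" using g q(1) by blast
    qed
    show ?thesis using 1 2 3 that by blast
  qed
  from p show ?thesis
  proof (cases rule: SS_cases)
    case (1 t) then show ?thesis using A by blast
  next
    case (2 t) then show ?thesis using B by blast
  next
    case (3 t)
    consider "t = 0" | "t = pi" | "0 < t \<and> t < pi" using 3 by linarith
    then show ?thesis
    proof cases
      case 1 then show ?thesis using A[of 0] 3 gamma0 by simp
    next
      case 2 then show ?thesis using B[of 0] 3 gammapi by simp
    next
      case 4: 3 then show ?thesis using C 3 by blast
    qed
  qed
qed



lemma cube_inj: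
  fixes c d :: real
  assumes "-1 \<le> c" "c \<le> 1" "-1 \<le> d" "d \<le> 1" "3*c - c^3 = 3*d - d^3"
  shows "c = d"
proof (rule ccontr)
  assume ne: "c \<noteq> d"
  have key: False if "-1 \<le> x" "x < y" "y \<le> 1" "3*x - x^3 = 3*y - y^3" for x y :: real
  proof -
    have s: "-2 < x + y" "x + y < 2" using that by linarith+
    have "(x + y)^2 < 2^2"
    proof -
      have "0 < (2 - (x+y)) * (2 + (x+y))" using s by (intro mult_pos_pos) auto
      then show ?thesis by (simp add: power2_eq_square algebra_simps)
    qed
    moreover have "x^2 \<le> 1" "y^2 \<le> 1" using that by (auto simp: abs_square_le_1)
    ultimately have "x^2 + x*y + y^2 < 3" by (simp add: power2_eq_square algebra_simps)
    then have "0 < (y - x) * (3 - (x^2 + x*y + y^2))" using that by simp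
    moreover have "(y - x) * (3 - (x^2 + x*y + y^2)) = (3*y - y^3) - (3*x - x^3)"
      by (simp add: power2_eq_square power3_eq_cube algebra_simps)
    ultimately show False using that by simp
  qed
  show False
  proof (cases "c < d")
    case True then show ?thesis using key[of c d] assms by auto
  next
    case False then show ?thesis using key[of d c] assms ne by auto
  qed
qed

lemma zeta_inj:
  assumes "0 \<le> t" "t \<le> pi" "0 \<le> s" "s \<le> pi" "zeta t = zeta s"
  shows "t = s"
proof -
  have "3 * cos t - cos t ^ 3 = 3 * cos s - cos s ^ 3" using assms(5) unfolding zeta_cos by simp
  then have "cos t = cos s" by (rule cube_inj[rotated 4]) auto
  then show ?thesis using cos_inj_pi assms by blast
qed

lemma circ_zero:
  fixes a1 a2 k c s :: real
  assumes nz: "a1 \<noteq> 0 \<or> a2 \<noteq> 0" and cs: "c^2 + s^2 = 1"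
    and k: "sqrt (a1^2 + a2^2) \<le> k" and z: "a1 * c + a2 * s + k = 0"
  shows "c = - a1 / sqrt (a1^2 + a2^2) \<and> s = - a2 / sqrt (a1^2 + a2^2) \<and> k = sqrt (a1^2 + a2^2)"
proof -
  define r where "r = sqrt (a1^2 + a2^2)"
  have r2: "r^2 = a1^2 + a2^2" unfolding r_def by simp
  have "0 < a1^2 + a2^2" using nz by (auto simp: sum_power2_gt_zero_iff)
  then have r: "0 < r" unfolding r_def by simp
  have "(a1 * c + a2 * s)^2 + (a1 * s - a2 * c)^2 = (a1^2 + a2^2) * (c^2 + s^2)"
    by (simp add: power2_eq_square algebra_simps)
  then have "(a1 * c + a2 * s)^2 = r^2 - (a1 * s - a2 * c)^2" using cs r2 by simp
  then have "(a1 * c + a2 * s)^2 \<le> r^2" using zero_le_power2[of "a1 * s - a2 * c"] by linarith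
  then have "\<bar>a1 * c + a2 * s\<bar> \<le> \<bar>r\<bar>" by (simp only: abs_le_square_iff)
  then have "\<bar>a1 * c + a2 * s\<bar> \<le> r" using r by simp
  then have e: "a1 * c + a2 * s = - r" and kr: "k = r" using z k unfolding r_def[symmetric] by linarith+
  have "(a1 + r * c)^2 + (a2 + r * s)^2 = (a1^2 + a2^2) + 2 * r * (a1 * c + a2 * s) + r^2 * (c^2 + s^2)"
    by (simp add: power2_eq_square algebra_simps)
  also have "\<dots> = 0" using e cs r2 by (simp add: power2_eq_square)
  finally have "a1 + r * c = 0" "a2 + r * s = 0" by (simp_all add: sum_power2_eq_zero_iff)
  then have "c = - a1 / r" "s = - a2 / r" using r by (simp_all add: field_simps)
  then show ?thesis using kr unfolding r_def by simp
qed



lemma val_alpha: "(a::real^4) \<bullet> lift4 (curve_alpha t) = a$1 * cos t + a$2 * sin t + (a$3 + a$4)"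
  by (simp add: inner_lift)
lemma val_beta: "(a::real^4) \<bullet> lift4 (curve_beta t) = a$1 * cos t + a$2 * sin t + (a$4 - a$3)"
  by (simp add: inner_lift)
lemma val_gamma: "(a::real^4) \<bullet> lift4 (curve_gamma t) = gg (a$1) (a$2) (a$3) (a$4) t"
  by (simp add: inner_lift gg_def zeta_def)

lemma classify:
  fixes a :: "real^4"
  assumes nn: "\<forall>p\<in>SS. 0 \<le> a \<bullet> lift4 p" and nz: "\<exists>p\<in>SS. a \<bullet> lift4 p \<noteq> 0"
  shows "(\<forall>q\<in>SS. a \<bullet> lift4 q = 0 \<longrightarrow> q$3 = 1) \<or> (\<forall>q\<in>SS. a \<bullet> lift4 q = 0 \<longrightarrow> q$3 = -1) \<or>
         (\<exists>p1 p2. \<forall>q\<in>SS. a \<bullet> lift4 q = 0 \<longrightarrow> q = p1 \<or> q = p2)"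
proof (cases "a$1 = 0 \<and> a$2 = 0")
  case True
  have v: "a \<bullet> lift4 q = a$3 * q$3 + a$4" for q using True by (simp add: inner_lift)
  show ?thesis
  proof (cases "a$3 = 0")
    case True
    then have "a$4 \<noteq> 0" using nz v by auto
    then show ?thesis using v True by auto
  next
    case False
    define z0 where "z0 = - a$4 / a$3"
    have zq: "q$3 = z0" if "a \<bullet> lift4 q = 0" for q using that v False unfolding z0_def by (simp add: field_simps)
    consider "z0 = 1" | "z0 = -1" | "z0 \<noteq> 1 \<and> z0 \<noteq> -1" by blast
    then show ?thesis
    proof cases
      case 1 then show ?thesis using zq by auto
    next
      case 2 then show ?thesis using zq by auto
    next
      case 3
      have uniq: "q = q'" if q: "q \<in> SS" "a \<bullet> lift4 q = 0" and q': "q' \<in> SS" "a \<bullet> lift4 q' = 0" for q q'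
      proof -
        have g: "\<exists>t. 0 \<le> t \<and> t \<le> pi \<and> x = curve_gamma t \<and> zeta t = z0" if "x \<in> SS" "a \<bullet> lift4 x = 0" for x
          using that(1)
        proof (cases rule: SS_cases)
          case (1 t) then show ?thesis using zq[OF that(2)] 3 by simp
        next
          case (2 t) then show ?thesis using zq[OF that(2)] 3 by simp
        next
          case (3 t)
          have "zeta t = z0" using zq[OF that(2)] 3 gamma3 by metis
          then show ?thesis using 3 by blast
        qed
        obtain t where t: "0 \<le> t" "t \<le> pi" "q = curve_gamma t" "zeta t = z0" using g q by blast
        obtain t' where t': "0 \<le> t'" "t' \<le> pi" "q' = curve_gamma t'" "zeta t' = z0" using g q' by blast
        have "t = t'" using zeta_inj[of t t'] t t' by simp
        then show ?thesis using t t' by simp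
      qed
      show ?thesis
      proof (cases "\<exists>q\<in>SS. a \<bullet> lift4 q = 0")
        case True
        then obtain q0 where "q0 \<in> SS" "a \<bullet> lift4 q0 = 0" by blast
        then show ?thesis using uniq by blast
      next
        case False then show ?thesis by blast
      qed
    qed
  qed
next
  case False
  define a1 where "a1 = a$1"
  define a2 where "a2 = a$2"
  define a3 where "a3 = a$3"
  define a4 where "a4 = a$4"
  have nz2: "a1 \<noteq> 0 \<or> a2 \<noteq> 0" using False unfolding a1_def a2_def by auto
  define r where "r = sqrt (a1^2 + a2^2)"
  have "0 < a1^2 + a2^2" using nz2 by (auto simp: sum_power2_gt_zero_iff)
  then have r: "0 < r" unfolding r_def by simp
  have "(-a1/r)^2 + (-a2/r)^2 = 1" using r \<open>0 < a1^2 + a2^2\<close> nz2 unfolding r_def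
    by (simp add: power_divide add_divide_distrib[symmetric])
  then obtain ts where ts: "0 \<le> ts" "ts < 2*pi" "-a1/r = cos ts" "-a2/r = sin ts"
    using sincos_total_2pi by blast
  have tsv: "a1 * cos ts + a2 * sin ts = - r"
  proof -
    have r2: "r^2 = a1^2 + a2^2" unfolding r_def by simp
    have "a1 * cos ts + a2 * sin ts = - (a1^2 + a2^2) / r" unfolding ts(3,4)[symmetric]
      by (simp add: power2_eq_square add_divide_distrib diff_divide_distrib)
    also have "\<dots> = - (r^2) / r" using r2 by simp
    also have "\<dots> = - r" using r by (simp add: power2_eq_square)
    finally show ?thesis .
  qed
  have ra: "r \<le> a3 + a4"
  proof -
    have "curve_alpha ts \<in> SS" unfolding SS_def using ts by auto
    then have "0 \<le> a1 * cos ts + a2 * sin ts + (a3 + a4)" using nn val_alpha unfolding a1_def a2_def a3_def a4_def by metis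
    moreover note tsv
    ultimately show ?thesis by simp
  qed
  have rb: "r \<le> a4 - a3"
  proof -
    have "curve_beta ts \<in> SS" unfolding SS_def using ts by auto
    then have "0 \<le> a1 * cos ts + a2 * sin ts + (a4 - a3)" using nn val_beta unfolding a1_def a2_def a3_def a4_def by metis
    moreover note tsv
    ultimately show ?thesis by simp
  qed
  define PA where "PA = (vector [-a1/r, -a2/r, 1] :: real^3)"
  define PB where "PB = (vector [-a1/r, -a2/r, -1] :: real^3)"
  have azero: "curve_alpha t = PA \<and> a3 + a4 = r" if "a \<bullet> lift4 (curve_alpha t) = 0" for t
  proof -
    have "a1 * cos t + a2 * sin t + (a3 + a4) = 0" using that val_alpha unfolding a1_def a2_def a3_def a4_def by metis
    then have "cos t = - a1 / r \<and> sin t = - a2 / r \<and> a3 + a4 = r"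
      using circ_zero[OF nz2, of "cos t" "sin t" "a3 + a4"] ra unfolding r_def by simp
    then show ?thesis unfolding PA_def by (simp add: vec3_eq)
  qed
  have bzero: "curve_beta t = PB \<and> a4 - a3 = r" if "a \<bullet> lift4 (curve_beta t) = 0" for t
  proof -
    have "a1 * cos t + a2 * sin t + (a4 - a3) = 0" using that val_beta unfolding a1_def a2_def a3_def a4_def by metis
    then have "cos t = - a1 / r \<and> sin t = - a2 / r \<and> a4 - a3 = r"
      using circ_zero[OF nz2, of "cos t" "sin t" "a4 - a3"] rb unfolding r_def by simp
    then show ?thesis unfolding PB_def by (simp add: vec3_eq)
  qed
  have gnn: "0 \<le> gg a1 a2 a3 a4 t" if "0 \<le> t" "t \<le> pi" for t
  proof -
    have "curve_gamma t \<in> SS" unfolding SS_def using that by auto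
    then show ?thesis using nn val_gamma unfolding a1_def a2_def a3_def a4_def by metis
  qed
  have gzero: "gg a1 a2 a3 a4 t = 0" if "a \<bullet> lift4 (curve_gamma t) = 0" for t
    using that val_gamma unfolding a1_def a2_def a3_def a4_def by metis
  have both: False if "a3 + a4 = r" "a4 - a3 = r" "0 < t1" "t1 < pi" "gg a1 a2 a3 a4 t1 = 0" for t1
  proof -
    have a3: "a3 = 0" "a4 = r" using that by linarith+
    have "0 \<le> gg a1 a2 a3 a4 (ts/2)" using gnn ts by simp
    also have "gg a1 a2 a3 a4 (ts/2) = a1 * (2 * cos ts - 1) + 2 * a2 * sin ts + r"
      unfolding gg_def using a3 by simp
    also have "\<dots> = - r - a1"
    proof -
      note tsv
      then show ?thesis by (simp add: algebra_simps)
    qed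
    finally have a1r: "a1 \<le> - r" by simp
    have "a1^2 \<le> r^2" unfolding r_def by simp
    then have "\<bar>a1\<bar> \<le> \<bar>r\<bar>" by (simp only: abs_le_square_iff)
    then have a1e: "a1 = - r" using a1r r by linarith
    then have "a1^2 = r^2" by simp
    then have "a2^2 = 0" unfolding r_def by simp
    then have a2e: "a2 = 0" by simp
    have "gg a1 a2 a3 a4 t1 = 2 * r * (1 - cos (2 * t1))"
      unfolding gg_def using a3 a1e a2e by (simp add: algebra_simps)
    then have "cos (2 * t1) = 1" using that(5) r by simp
    then have "2 * t1 = 0" using cos_one_small[of "2*t1"] that by auto
    then show False using that by simp
  qed
  show ?thesis
  proof (cases "\<exists>t1. 0 < t1 \<and> t1 < pi \<and> a \<bullet> lift4 (curve_gamma t1) = 0")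
    case True
    then obtain t1 where t1: "0 < t1" "t1 < pi" "a \<bullet> lift4 (curve_gamma t1) = 0" by blast
    define p1 where "p1 = (if a3 + a4 = r then PA else PB)"
    have "q = p1 \<or> q = curve_gamma t1" if q: "q \<in> SS" "a \<bullet> lift4 q = 0" for q
      using q(1)
    proof (cases rule: SS_cases)
      case (1 t) then show ?thesis using azero[of t] q unfolding p1_def by auto
    next
      case (2 t) then show ?thesis using bzero[of t] q both[of t1] t1 gzero unfolding p1_def by auto
    next
      case (3 t)
      consider "t = 0" | "t = pi" | "0 < t \<and> t < pi" using 3 by linarith
      then show ?thesis
      proof cases
        case 1 then show ?thesis using azero[of 0] q 3 gamma0 unfolding p1_def by auto
      next
        case 2 then show ?thesis using bzero[of 0] q 3 gammapi both[of t1] t1 gzero unfolding p1_def by auto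
      next
        case 4: 3
        have "t = t1" using gamma_zero_unique[OF nz2 gnn, of t t1] 4 t1 gzero q 3 by auto
        then show ?thesis using 3 by simp
      qed
    qed
    then show ?thesis by blast
  next
    case False
    have "q = PA \<or> q = PB" if q: "q \<in> SS" "a \<bullet> lift4 q = 0" for q
      using q(1)
    proof (cases rule: SS_cases)
      case (1 t) then show ?thesis using azero[of t] q by auto
    next
      case (2 t) then show ?thesis using bzero[of t] q by auto
    next
      case (3 t)
      consider "t = 0" | "t = pi" | "0 < t \<and> t < pi" using 3 by linarith
      then show ?thesis
      proof cases
        case 1 then show ?thesis using azero[of 0] q 3 gamma0 by auto
      next
        case 2 then show ?thesis using bzero[of 0] q 3 gammapi by auto
      next
        case 4: 3 then show ?thesis using False q 3 by auto
      qed
    qed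
    then show ?thesis by blast
  qed
qed



definition e4 :: "real^4" where "e4 = vector [0,0,0,1]"
lemma e4_lift [simp]: "e4 \<bullet> lift4 q = 1" by (simp add: e4_def inner_lift)

lemma dual_comb:
  assumes "\<forall>q\<in>SS. 0 \<le> h1 \<bullet> lift4 q" "\<forall>q\<in>SS. 0 \<le> h2 \<bullet> lift4 q" "0 \<le> c1" "0 \<le> c2"
  shows "c1 *\<^sub>R h1 + c2 *\<^sub>R h2 \<in> dual_cone KC"
  using assms by (intro dual_K_I) (auto simp: inner_add_left)

lemma two_point:
  assumes E: "E \<subseteq> SS" "E \<subseteq> {p1, p2}" and yE: "\<forall>e\<in>E. 0 \<le> y \<bullet> lift4 e"
  shows "\<exists>u\<in>dual_cone KC. \<forall>e\<in>E. (y - u) \<bullet> lift4 e = 0"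
proof (cases "p1 \<in> E \<and> p2 \<in> E \<and> p1 \<noteq> p2")
  case True
  obtain h1 where h1: "\<forall>q\<in>SS. 0 \<le> h1 \<bullet> lift4 q" "h1 \<bullet> lift4 p1 = 0" "\<forall>q\<in>SS. h1 \<bullet> lift4 q = 0 \<longrightarrow> q = p1"
    using exposer[of p1] True E by blast
  obtain h2 where h2: "\<forall>q\<in>SS. 0 \<le> h2 \<bullet> lift4 q" "h2 \<bullet> lift4 p2 = 0" "\<forall>q\<in>SS. h2 \<bullet> lift4 q = 0 \<longrightarrow> q = p2"
    using exposer[of p2] True E by blast
  have p2s: "p2 \<in> SS" "p1 \<in> SS" using True E by auto
  have pos1: "0 < h1 \<bullet> lift4 p2" using h1 p2s True by (metis order_le_less)
  have pos2: "0 < h2 \<bullet> lift4 p1" using h2 p2s True by (metis order_le_less)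
  define c1 where "c1 = (y \<bullet> lift4 p2) / (h1 \<bullet> lift4 p2)"
  define c2 where "c2 = (y \<bullet> lift4 p1) / (h2 \<bullet> lift4 p1)"
  have c: "0 \<le> c1" "0 \<le> c2" unfolding c1_def c2_def using yE True pos1 pos2 by auto
  define u where "u = c1 *\<^sub>R h1 + c2 *\<^sub>R h2"
  have "u \<in> dual_cone KC" unfolding u_def by (rule dual_comb[OF h1(1) h2(1) c])
  moreover have "(y - u) \<bullet> lift4 p1 = 0" "(y - u) \<bullet> lift4 p2 = 0"
    unfolding u_def c1_def c2_def using pos1 pos2 h1(2) h2(2) by (simp_all add: inner_diff_left inner_add_left)
  ultimately show ?thesis using E by blast
next
  case False
  then obtain p where p: "E \<subseteq> {p}" using E by blast
  define u where "u = (if p \<in> E then y \<bullet> lift4 p else 0) *\<^sub>R e4"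
  have "u \<in> dual_cone KC" unfolding u_def using yE by (intro dual_K_I) auto
  moreover have "\<forall>e\<in>E. (y - u) \<bullet> lift4 e = 0" unfolding u_def using p by (auto simp: inner_diff_left)
  ultimately show ?thesis by blast
qed

lemma SS_top: "q \<in> SS \<Longrightarrow> q$3 = 1 \<Longrightarrow> q$1^2 + q$2^2 = 1"
proof -
  assume q: "q \<in> SS" "q$3 = 1"
  from q(1) show ?thesis
  proof (cases rule: SS_cases)
    case (1 t) then show ?thesis by simp
  next
    case (2 t) then show ?thesis using q(2) by simp
  next
    case (3 t)
    then have "zeta t = 1" using q(2) gamma3 by metis
    then have "t = 0" using zeta_eq1 3 by blast
    then show ?thesis using 3 by simp
  qed
qed

lemma SS_bot: "q \<in> SS \<Longrightarrow> q$3 = -1 \<Longrightarrow> q$1^2 + q$2^2 = 1"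
proof -
  assume q: "q \<in> SS" "q$3 = -1"
  from q(1) show ?thesis
  proof (cases rule: SS_cases)
    case (1 t) then show ?thesis using q(2) by simp
  next
    case (2 t) then show ?thesis by simp
  next
    case (3 t)
    then have "zeta t = -1" using q(2) gamma3 by metis
    then have "zeta (pi - t) = 1" using zeta_pi_minus[of t] by simp
    then have "pi - t = 0" using zeta_eq1[of "pi - t"] 3 by auto
    then have "t = pi" by simp
    then show ?thesis using 3 by simp
  qed
qed

lemma unit_angle: "c^2 + s^2 = 1 \<Longrightarrow> \<exists>t. 0 \<le> t \<and> t \<le> 2*pi \<and> c = cos t \<and> s = sin t"
  using sincos_total_2pi by (metis less_eq_real_def)

lemma circle_in_SS:
  assumes "c^2 + s^2 = 1" "z0 = 1 \<or> z0 = -1"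
  shows "vector [c, s, z0] \<in> SS"
proof -
  obtain t where t: "0 \<le> t" "t \<le> 2*pi" "c = cos t" "s = sin t" using unit_angle[OF assms(1)] by blast
  show ?thesis using assms(2)
  proof
    assume "z0 = 1"
    then have "vector [c, s, z0] = curve_alpha t" using t by (simp add: vec3_eq)
    then show ?thesis unfolding SS_def using t by auto
  next
    assume "z0 = -1"
    then have "vector [c, s, z0] = curve_beta t" using t by (simp add: vec3_eq)
    then show ?thesis unfolding SS_def using t by auto
  qed
qed

lemma disk_in_C:
  assumes x: "x1^2 + x2^2 \<le> 1" and z: "z0 = 1 \<or> z0 = -1"
  shows "vector [x1, x2, z0] \<in> setC"
proof -
  define r where "r = sqrt (x1^2 + x2^2)"
  have r: "0 \<le> r" "r \<le> 1" unfolding r_def using x by auto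
  obtain e1 e2 where e: "e1^2 + e2^2 = 1" "x1 = r * e1" "x2 = r * e2"
  proof (cases "r = 0")
    case True
    then have "x1 = 0" "x2 = 0" unfolding r_def by auto
    then show ?thesis using that[of 1 0] True by simp
  next
    case False
    then have rp: "0 < r" using r by simp
    have "x1 \<noteq> 0 \<or> x2 \<noteq> 0" using rp unfolding r_def by auto
    then have "(x1/r)^2 + (x2/r)^2 = 1" using rp unfolding r_def
      by (simp add: power_divide add_divide_distrib[symmetric])
    then show ?thesis using that[of "x1/r" "x2/r"] rp by simp
  qed
  have "(-e1)^2 + (-e2)^2 = 1" using e by simp
  then have A: "vector [e1, e2, z0] \<in> setC" "vector [-e1, -e2, z0] \<in> setC"
    using circle_in_SS[OF e(1) z] circle_in_SS[of "-e1" "-e2" z0] z SS_setC by auto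
  have "((1 + r)/2) *\<^sub>R vector [e1, e2, z0] + ((1 - r)/2) *\<^sub>R vector [-e1, -e2, z0] \<in> setC"
    unfolding setC_SS using A r unfolding setC_SS
    by (intro convexD[OF convex_convex_hull]) (auto simp: add_divide_distrib[symmetric])
  moreover have "((1 + r)/2) *\<^sub>R vector [e1, e2, z0] + ((1 - r)/2) *\<^sub>R vector [-e1, -e2, z0] = (vector [x1, x2, z0] :: real^3)"
    using e by (simp add: vec3_eq algebra_simps add_divide_distrib[symmetric])
  ultimately show ?thesis by simp
qed



lemma SS_circ: "q \<in> SS \<Longrightarrow> q$3 = z0 \<Longrightarrow> z0 = 1 \<or> z0 = -1 \<Longrightarrow> q$1^2 + q$2^2 = 1"
  using SS_top SS_bot by blast

lemma disk_face:
  assumes F: "is_face F KC" and z: "z0 = 1 \<or> z0 = -1"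
    and p: "p \<in> SS" "p$3 = z0" "lift4 p \<in> F" and q: "q \<in> SS" "q$3 = z0" "lift4 q \<in> F" and pq: "p \<noteq> q"
    and cs: "c^2 + s^2 = 1"
  shows "lift4 (vector [c, s, z0]) \<in> F"
proof -
  have pu: "p$1^2 + p$2^2 = 1" using SS_circ p z by blast
  have qu: "q$1^2 + q$2^2 = 1" using SS_circ q z by blast
  define m1 where "m1 = (p$1 + q$1)/2"
  define m2 where "m2 = (p$2 + q$2)/2"
  define m where "m = (vector [m1, m2, z0] :: real^3)"
  have "(1/2) *\<^sub>R lift4 p + (1/2) *\<^sub>R lift4 q \<in> F"
    using F p q unfolding is_face_def by (intro convexD) auto
  moreover have "(1/2) *\<^sub>R lift4 p + (1/2) *\<^sub>R lift4 q = lift4 m"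
    using p q unfolding m_def m1_def m2_def by (simp add: vec_eq_iff forall_4 add_divide_distrib)
  ultimately have mF: "lift4 m \<in> F" by simp
  define mm where "mm = m1^2 + m2^2"
  have ne: "p$1 \<noteq> q$1 \<or> p$2 \<noteq> q$2" using pq p q by (auto simp: vec3_eq)
  have "0 < (p$1 - q$1)^2 + (p$2 - q$2)^2" using ne by (auto simp: sum_power2_gt_zero_iff)
  moreover have "4 * mm = (p$1 + q$1)^2 + (p$2 + q$2)^2"
    unfolding mm_def m1_def m2_def by (simp add: power_divide)
  moreover have "(p$1 - q$1)^2 + (p$2 - q$2)^2 + ((p$1 + q$1)^2 + (p$2 + q$2)^2) = 2 * (p$1^2 + p$2^2) + 2 * (q$1^2 + q$2^2)"
    by (simp add: power2_eq_square algebra_simps)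
  ultimately have mm1: "mm < 1" using pu qu by simp
  define a where "a = (1 - mm) / 4"
  have "0 \<le> mm" unfolding mm_def by simp
  then have a: "0 < a" "a < 1" "mm + 4 * a = 1" unfolding a_def using mm1 by (auto simp: field_simps)
  define y where "y = (vector [(m1 - a * c)/(1-a), (m2 - a * s)/(1-a), z0] :: real^3)"
  have dot: "\<bar>m1 * c + m2 * s\<bar> \<le> 1"
  proof -
    have "(m1 * c + m2 * s)^2 + (m1 * s - m2 * c)^2 = mm * (c^2 + s^2)"
      unfolding mm_def by (simp add: power2_eq_square algebra_simps)
    then have "(m1 * c + m2 * s)^2 + (m1 * s - m2 * c)^2 = mm" using cs by simp
    then have "(m1 * c + m2 * s)^2 \<le> 1" using mm1 zero_le_power2[of "m1 * s - m2 * c"] by linarith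
    then show ?thesis by (simp add: abs_square_le_1)
  qed
  have "a * (-1) \<le> a * (m1 * c + m2 * s)" using dot a by (intro mult_left_mono) (auto simp: abs_le_iff)
  have "(m1 - a * c)^2 + (m2 - a * s)^2 = mm - 2 * a * (m1 * c + m2 * s) + a^2 * (c^2 + s^2)"
    unfolding mm_def by (simp add: power2_eq_square algebra_simps)
  also have "\<dots> \<le> mm + 2 * a + a^2" using \<open>a * (-1) \<le> a * (m1 * c + m2 * s)\<close> cs by simp
  also have "\<dots> = (1 - a)^2" using a(3) by (simp add: power2_eq_square algebra_simps)
  finally have le: "(m1 - a * c)^2 + (m2 - a * s)^2 \<le> (1 - a)^2" .
  have "((m1 - a * c)/(1-a))^2 + ((m2 - a * s)/(1-a))^2 = ((m1 - a * c)^2 + (m2 - a * s)^2) / (1-a)^2"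
    by (simp add: power_divide add_divide_distrib)
  also have "\<dots> \<le> 1" using le a by simp
  finally have yC: "y \<in> setC" unfolding y_def using disk_in_C z by blast
  have xC: "vector [c, s, z0] \<in> setC" using circle_in_SS[OF cs z] SS_setC by blast
  have c1: "(1-a) * ((m1 - a * c)/(1-a)) = m1 - a * c" "(1-a) * ((m2 - a * s)/(1-a)) = m2 - a * s" using a by simp_all
  have "a *\<^sub>R vector [c, s, z0] + (1 - a) *\<^sub>R y = m"
    unfolding y_def m_def vec3_eq using a by (simp add: c1) (simp add: algebra_simps)
  then have "a *\<^sub>R lift4 (vector [c, s, z0]) + (1 - a) *\<^sub>R lift4 y = lift4 m"
    using lift4_comb[of a "1-a" "vector [c, s, z0]" y] by simp
  then show ?thesis using face_prop(1)[OF F lift_in_K[OF xC] lift_in_K[OF yC] a(1,2)] mF by simp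
qed

lemma disk_construct:
  assumes z: "z0 = 1 \<or> z0 = -1"
    and hyp: "\<And>c s. c^2 + s^2 = 1 \<Longrightarrow> 0 \<le> y \<bullet> lift4 (vector [c, s, z0])"
  shows "\<exists>u\<in>dual_cone KC. \<forall>e\<in>SS. e$3 = z0 \<longrightarrow> (y - u) \<bullet> lift4 e = 0"
proof -
  define r where "r = sqrt ((y$1)^2 + (y$2)^2)"
  have val: "y \<bullet> lift4 (vector [c, s, z0]) = y$1 * c + y$2 * s + y$3 * z0 + y$4" for c s
    by (simp add: inner_lift)
  show ?thesis
  proof (cases "r = 0")
    case True
    then have y12: "y$1 = 0" "y$2 = 0" unfolding r_def by auto
    have nn: "0 \<le> y$3 * z0 + y$4" using hyp[of 1 0] val y12 by simp
    define u where "u = (y$3 * z0 + y$4) *\<^sub>R e4"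
    have "u \<in> dual_cone KC" unfolding u_def using nn by (intro dual_K_I) auto
    moreover have "(y - u) \<bullet> lift4 e = 0" if "e$3 = z0" for e
      unfolding u_def using y12 that by (simp add: inner_diff_left inner_lift e4_def)
    ultimately show ?thesis by blast
  next
    case False
    moreover have "0 \<le> r" unfolding r_def by simp
    ultimately have r: "0 < r" by simp
    have nzy: "y$1 \<noteq> 0 \<or> y$2 \<noteq> 0" using False unfolding r_def by auto
    have "(-(y$1)/r)^2 + (-(y$2)/r)^2 = 1" using r nzy unfolding r_def
      by (simp add: power_divide add_divide_distrib[symmetric])
    then obtain th where th: "-(y$1)/r = cos th" "-(y$2)/r = sin th"
      using sincos_total_2pi by metis
    have y1: "y$1 = - r * cos th" and y2: "y$2 = - r * sin th" using th r by (auto simp: field_simps)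
    have yy: "y$1 * cos th + y$2 * sin th = - r"
    proof -
      have "y$1 * cos th + y$2 * sin th = - r * (cos th * cos th + sin th * sin th)"
        unfolding y1 y2 by algebra
      then show ?thesis by (simp only: sin_cos_squared_add3)
    qed
    have "0 \<le> y \<bullet> lift4 (vector [cos th, sin th, z0])" using hyp[of "cos th" "sin th"] by simp
    then have nn: "0 \<le> - r + y$3 * z0 + y$4" unfolding val using yy by linarith
    have ye: "y \<bullet> lift4 e = y$1 * e$1 + y$2 * e$2 + y$3 * e$3 + y$4" for e by (rule inner_lift)
    have e4p: "\<forall>q\<in>SS. 0 \<le> e4 \<bullet> lift4 q" by simp
    from z show ?thesis
    proof
      assume z1: "z0 = 1"
      obtain l where l: "0 \<le> l" "\<forall>q\<in>SS. cos th * q$1 + sin th * q$2 + l * q$3 \<le> 1 + l"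
        using alpha_exposer[of th] by blast
      define h where "h = (vector [- cos th, - sin th, - l, 1 + l] :: real^4)"
      have hq: "h \<bullet> lift4 q = (1 + l) - (cos th * q$1 + sin th * q$2 + l * q$3)" for q
        unfolding h_def inner_lift by simp
      have hp: "\<forall>q\<in>SS. 0 \<le> h \<bullet> lift4 q" using l(2) unfolding hq by auto
      have c2: "0 \<le> y$3 + y$4 - r" using nn z1 by simp
      define u where "u = r *\<^sub>R h + (y$3 + y$4 - r) *\<^sub>R e4"
      have "u \<in> dual_cone KC" unfolding u_def using dual_comb[OF hp e4p _ c2] r by simp
      moreover have "(y - u) \<bullet> lift4 e = 0" if "e$3 = z0" for e
      proof -
        have "(y - u) \<bullet> lift4 e = y \<bullet> lift4 e - r * (h \<bullet> lift4 e) - (y$3 + y$4 - r) * (e4 \<bullet> lift4 e)"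
          unfolding u_def by (simp add: inner_diff_left inner_add_left)
        also have "\<dots> = 0" unfolding ye hq e4_lift y1 y2 using that z1 by (simp add: algebra_simps)
        finally show ?thesis .
      qed
      ultimately show ?thesis by blast
    next
      assume z1: "z0 = -1"
      obtain l where l: "0 \<le> l" "\<forall>q\<in>SS. cos th * q$1 + sin th * q$2 - l * q$3 \<le> 1 + l"
        using beta_exposer[of th] by blast
      define h where "h = (vector [- cos th, - sin th, l, 1 + l] :: real^4)"
      have hq: "h \<bullet> lift4 q = (1 + l) - (cos th * q$1 + sin th * q$2 - l * q$3)" for q
        unfolding h_def inner_lift by simp
      have hp: "\<forall>q\<in>SS. 0 \<le> h \<bullet> lift4 q" using l(2) unfolding hq by auto
      have c2: "0 \<le> y$4 - y$3 - r" using nn z1 by simp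
      define u where "u = r *\<^sub>R h + (y$4 - y$3 - r) *\<^sub>R e4"
      have "u \<in> dual_cone KC" unfolding u_def using dual_comb[OF hp e4p _ c2] r by simp
      moreover have "(y - u) \<bullet> lift4 e = 0" if "e$3 = z0" for e
      proof -
        have "(y - u) \<bullet> lift4 e = y \<bullet> lift4 e - r * (h \<bullet> lift4 e) - (y$4 - y$3 - r) * (e4 \<bullet> lift4 e)"
          unfolding u_def by (simp add: inner_diff_left inner_add_left)
        also have "\<dots> = 0" unfolding ye hq e4_lift y1 y2 using that z1 by (simp add: algebra_simps)
        finally show ?thesis .
      qed
      ultimately show ?thesis by blast
    qed
  qed
qed



lemma disk_case:
  assumes F: "is_face F KC" and z: "z0 = 1 \<or> z0 = -1" and y: "y \<in> dual_cone F"
    and E: "\<forall>e\<in>SS. lift4 e \<in> F \<longrightarrow> e$3 = z0"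
  shows "\<exists>u\<in>dual_cone KC. \<forall>e\<in>SS. lift4 e \<in> F \<longrightarrow> (y - u) \<bullet> lift4 e = 0"
proof (cases "\<exists>p\<in>SS. \<exists>q\<in>SS. lift4 p \<in> F \<and> lift4 q \<in> F \<and> p \<noteq> q")
  case True
  then obtain p q where pq: "p \<in> SS" "q \<in> SS" "lift4 p \<in> F" "lift4 q \<in> F" "p \<noteq> q" by blast
  have hyp: "0 \<le> y \<bullet> lift4 (vector [c, s, z0])" if "c^2 + s^2 = 1" for c s
  proof -
    have "lift4 (vector [c, s, z0]) \<in> F"
      using disk_face[OF F z pq(1) _ pq(3) pq(2) _ pq(4) pq(5) that] E pq by blast
    then show ?thesis using y unfolding dual_cone_def by blast
  qed
  obtain u where u: "u \<in> dual_cone KC" "\<forall>e\<in>SS. e$3 = z0 \<longrightarrow> (y - u) \<bullet> lift4 e = 0"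
    using disk_construct[OF z hyp] by blast
  then show ?thesis using E by blast
next
  case False
  define Ex where "Ex = {e\<in>SS. lift4 e \<in> F}"
  obtain p where p: "Ex \<subseteq> {p}" using False unfolding Ex_def by blast
  have yE: "\<forall>e\<in>Ex. 0 \<le> y \<bullet> lift4 e" using y unfolding Ex_def dual_cone_def by blast
  obtain u where "u \<in> dual_cone KC" "\<forall>e\<in>Ex. (y - u) \<bullet> lift4 e = 0"
    using two_point[of Ex p p y] p yE unfolding Ex_def by auto
  then show ?thesis unfolding Ex_def by blast
qed

lemma nice_KC: "nice KC"
  unfolding nice_def
proof (intro allI impI)
  fix F assume F: "is_face F KC"
  show "dual_cone F = {u + v |u v. u \<in> dual_cone KC \<and> v \<in> perp F}"
  proof (intro subset_antisym subsetI)
    fix x assume "x \<in> {u + v |u v. u \<in> dual_cone KC \<and> v \<in> perp F}"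
    then obtain u v where uv: "x = u + v" "u \<in> dual_cone KC" "v \<in> perp F" by blast
    have "0 \<le> x \<bullet> f" if "f \<in> F" for f
    proof -
      have "f \<in> KC" using that face_sub[OF F] by blast
      then have "0 \<le> u \<bullet> f" using uv(2) unfolding dual_cone_def by blast
      moreover have "v \<bullet> f = 0" using uv(3) that unfolding perp_def by blast
      ultimately show ?thesis using uv(1) by (simp add: inner_add_left)
    qed
    then show "x \<in> dual_cone F" unfolding dual_cone_def by blast
  next
    fix y assume y: "y \<in> dual_cone F"
    have key: "\<exists>u\<in>dual_cone KC. \<forall>f\<in>F. (y - u) \<bullet> f = 0"
    proof (cases "F = {}")
      case True
      have "0 \<in> dual_cone KC" unfolding dual_cone_def by simp
      then show ?thesis using True by blast
    next
      case ne: False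
      show ?thesis
      proof (cases "F = KC")
        case True
        then show ?thesis using y by (intro bexI[of _ y]) auto
      next
        case nK: False
        obtain a where a: "\<forall>p\<in>SS. 0 \<le> a \<bullet> lift4 p" "\<forall>f\<in>F. a \<bullet> f = 0" "\<exists>p\<in>SS. a \<bullet> lift4 p \<noteq> 0"
          using separation[OF F ne nK] by blast
        have EZ: "a \<bullet> lift4 e = 0" if "lift4 e \<in> F" for e using a(2) that by blast
        have "\<exists>u\<in>dual_cone KC. \<forall>e\<in>SS. lift4 e \<in> F \<longrightarrow> (y - u) \<bullet> lift4 e = 0"
          using classify[OF a(1) a(3)]
        proof (elim disjE exE)
          assume "\<forall>q\<in>SS. a \<bullet> lift4 q = 0 \<longrightarrow> q$3 = 1"
          then have "\<forall>e\<in>SS. lift4 e \<in> F \<longrightarrow> e$3 = 1" using EZ by blast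
          then show ?thesis using disk_case[OF F _ y] by blast
        next
          assume "\<forall>q\<in>SS. a \<bullet> lift4 q = 0 \<longrightarrow> q$3 = -1"
          then have "\<forall>e\<in>SS. lift4 e \<in> F \<longrightarrow> e$3 = -1" using EZ by blast
          then show ?thesis using disk_case[OF F _ y] by blast
        next
          fix p1 p2 assume pp: "\<forall>q\<in>SS. a \<bullet> lift4 q = 0 \<longrightarrow> q = p1 \<or> q = p2"
          define Ex where "Ex = {e\<in>SS. lift4 e \<in> F}"
          have "Ex \<subseteq> {p1, p2}" using pp EZ unfolding Ex_def by blast
          moreover have yE: "\<forall>e\<in>Ex. 0 \<le> y \<bullet> lift4 e" using y unfolding Ex_def dual_cone_def by blast
          ultimately obtain u where "u \<in> dual_cone KC" "\<forall>e\<in>Ex. (y - u) \<bullet> lift4 e = 0"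
            using two_point[of Ex p1 p2 y] unfolding Ex_def by auto
          then show ?thesis unfolding Ex_def by blast
        qed
        then obtain u where u: "u \<in> dual_cone KC" "\<forall>e\<in>SS. lift4 e \<in> F \<longrightarrow> (y - u) \<bullet> lift4 e = 0"
          by blast
        have "\<forall>f\<in>F. (y - u) \<bullet> f = 0" using face_perp[OF F u(2)] by blast
        then show ?thesis using u(1) by blast
      qed
    qed
    then obtain u where u: "u \<in> dual_cone KC" "\<forall>f\<in>F. (y - u) \<bullet> f = 0" by blast
    have "y - u \<in> perp F" unfolding perp_def using u(2) by blast
    moreover have "y = u + (y - u)" by simp
    ultimately show "y \<in> {u + v |u v. u \<in> dual_cone KC \<and> v \<in> perp F}" using u(1) by blast
  qed
qed

theorem proposition5p1:
  shows "nice (cone_of (lift4 ` setC))"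
  using nice_KC unfolding KC_def .


end
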